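(* Assume that the equation $$\dot x(t)=\sum_{j=-\infty}^{\infty}A_j(t)\,x(t+r_j)+\int_{\mathbb R}\mathcal K(\xi;t)\,x(t+\xi)\,d\xi \qquad (\mathrm E)$$ satisfies (HA), (HK), (HH) and (HSh1) as described in the context, and let $\alpha^{(k)}=(\tilde A_{-(K_{\mathrm{const}}+n)}^{(k,k)})_{n\ge0}$ and $\beta^{(k)}=(\tilde A_{K_{\mathrm{const}}+n}^{(k,k)})_{n\ge0}$ for $1\le k\le M$. Then the linear spans of $\{S^N\alpha^{(k)}:N\ge0\}$ and of $\{S^N\beta^{(k)}:N\ge0\}$ are both infinite-dimensional for every $1\le k\le M$ if and only if the cyclicity condition (HSh2) is satisfied.
   Context: $M\ge1$ is an integer, $|\cdot|$ is a norm on $\mathbb C^M$ with induced matrix norm, and $A^\dagger$ denotes the conjugate transpose; $A^{(k,k)}$ is the $(k,k)$ entry of a matrix $A$. In (E), $x(t)\in\mathbb C^M$, the shifts are $r_j\in\mathbb R$ ($j\in\mathbb Z$) with $\mathcal R=\{r_j\}$, $A_j(t)\in\mathbb C^{M\times M}$ and $\mathcal K(\xi;t)\in\mathbb C^{M\times M}$. Let $-\infty\le r_{\min}\le0\le r_{\max}\le\infty$, $r_{\min}<r_{\max}$, be such that all $r_j$ and the supports of all $\mathcal K(\cdot;t)$ lie in $\overline{(r_{\min},r_{\max})}$, with $|r_{\min}|$ and $r_{\max}$ as small as possible. For $\eta>0$ write $\|\mathcal V\|_\eta=\int_{\mathbb R}e^{\eta|\xi|}|\mathcal V(\xi)|\,d\xi$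 and $L^1_\eta$ for the space of $\mathcal V\in L^1(\mathbb R;\mathbb C^{M\times M})$ with $\|\mathcal V\|_\eta<\infty$; $\mathcal K(\cdot;t-\cdot)$ denotes $\xi\mapsto\mathcal K(\xi;t-\xi)$. Standing hypotheses, for some $\tilde\eta>0$: (HA) each $t\mapsto A_j(t)$ is bounded and $C^1$, $\sum_j\|A_j\|_\infty e^{\tilde\eta|r_j|}<\infty$, and $\mathcal R$ is closed with $0\in\mathcal R$. (HK) $t\mapsto\mathcal K(\cdot;t)$ lies in $C^1(\mathbb R;L^1_{\tilde\eta})$, with $\sup_t\|\mathcal K(\cdot;t)\|_{\tilde\eta}+\sup_t\|\tfrac{d}{dt}\mathcal K(\cdot;t)\|_{\tilde\eta}<\infty$ and $\sup_t\|\mathcal K(\cdot;t-\cdot)\|_{\tilde\eta}+\sup_t\|\tfrac{d}{dt}\mathcal K(\cdot;t-\cdot)\|_{\tilde\eta}<\infty$. (HH) the limits $A_j(\pm\infty)=\lim_{t\to\pm\infty}A_j(t)$, $\mathcal K(\xi;\pm\infty)=\lim_{t\to\pm\infty}\mathcal K(\xi;t)$ exist; $\lim_{t\to\pm\infty}\sum_j|A_j(t)-A_j(\pm\infty)|e^{\tilde\eta|r_j|}=0$, $\lim_{t\to\pm\infty}\|\mathcal K(\cdot;t)-\mathcal K(\cdot;\pm\infty)\|_{\tilde\eta}=0$, $\lim_{t\to\pm\infty}\|\mathcal K(\cdot;t-\cdot)-\mathcal K(\cdot;\pm\infty)\|_{\tilde\eta}=0$; and $\det\Delta^\pm(iy)\ne0$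 for all $y\in\mathbb R$, where $\Delta^\pm(z)=zI-\int_{\mathbb R}\mathcal K(\xi;\pm\infty)e^{z\xi}d\xi-\sum_jA_j(\pm\infty)e^{zr_j}$. (Hb): there exist an integer $K_{\mathrm{const}}\ge1$ and diagonal matrices $\tilde A_j$ ($|j|\ge K_{\mathrm{const}}$) and $\tilde{\mathcal K}(\xi)$ ($|\xi|\ge K_{\mathrm{const}}$) such that $r_j=j$ for all $j\in\mathbb Z$, $A_j(t)=\tilde A_j$ for all $t$ whenever $|j|\ge K_{\mathrm{const}}$, and $\mathcal K(\xi;t)=\tilde{\mathcal K}(\xi)$ for all $t$ whenever $|\xi|\ge K_{\mathrm{const}}$. (HSh1): (Hb) holds and $\mathcal K(\cdot;t)$ is supported in $[-K_{\mathrm{const}},K_{\mathrm{const}}]$ for each $t$. Backward shift: $S:\ell^2(\mathbb N_0;\mathbb C)\to\ell^2(\mathbb N_0;\mathbb C)$, $(a_n)_{n\ge0}\mapsto(a_n)_{n\ge1}$; $a$ is cyclic if $\operatorname{span}\{S^Na:N\ge0\}$ is dense in $\ell^2(\mathbb N_0;\mathbb C)$. (HSh2): the sequences $\alpha^{(k)}$ and $\beta^{(k)}$ are cyclic for $S$ for every $1\le k\le M$. *)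

theory Defs
  imports "HOL-Analysis.Analysis" "HOL-Library.Function_Algebras"
begin

section \<open>Matrices over C^M: complex^'m^'m (the dimension M is CARD('m))\<close>

text \<open>Scalar multiplication of a complex matrix by a complex number
  (note: * on the vec type is componentwise, so we do not use it).\<close>
definition cscale :: "complex \<Rightarrow> complex^'m^'m \<Rightarrow> complex^'m^'m" where
  "cscale c B = (\<chi> i j. c * B $ i $ j)"

definition diag_matrix :: "complex^'m^'m \<Rightarrow> bool" where
  "diag_matrix B \<longleftrightarrow> (\<forall>i j. i \<noteq> j \<longrightarrow> B $ i $ j = 0)"

definition wnorm :: "real \<Rightarrow> (real \<Rightarrow> complex^'m^'m) \<Rightarrow> real" where
  "wnorm eta V = (LINT xi|lborel. exp (eta * \<bar>xi\<bar>) * norm (V xi))"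

definition wL1 :: "real \<Rightarrow> (real \<Rightarrow> complex^'m^'m) \<Rightarrow> bool" where
  "wL1 eta V \<longleftrightarrow> V \<in> borel_measurable lborel \<and>
     integrable lborel (\<lambda>xi. exp (eta * \<bar>xi\<bar>) * norm (V xi))"

definition wL1_deriv :: "real \<Rightarrow> (real \<Rightarrow> real \<Rightarrow> complex^'m^'m) \<Rightarrow> (real \<Rightarrow> real \<Rightarrow> complex^'m^'m) \<Rightarrow> bool" where
  "wL1_deriv eta F DF \<longleftrightarrow>
     (\<forall>t. wL1 eta (F t) \<and> wL1 eta (DF t) \<and>
        ((\<lambda>h. wnorm eta (\<lambda>xi. inverse h *\<^sub>R (F (t + h) xi - F t xi) - DF t xi)) \<longlongrightarrow> 0) (at 0))"

definition wL1_C1 :: "real \<Rightarrow> (real \<Rightarrow> real \<Rightarrow> complex^'m^'m) \<Rightarrow> (real \<Rightarrow> real \<Rightarrow> complex^'m^'m) \<Rightarrow> bool" where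
  "wL1_C1 eta F DF \<longleftrightarrow> wL1_deriv eta F DF \<and>
     (\<forall>t. ((\<lambda>s. wnorm eta (\<lambda>xi. DF s xi - DF t xi)) \<longlongrightarrow> 0) (at t))"

definition Delta :: "(real \<Rightarrow> complex^'m^'m) \<Rightarrow> (int \<Rightarrow> complex^'m^'m) \<Rightarrow> (int \<Rightarrow> real)
    \<Rightarrow> complex \<Rightarrow> complex^'m^'m" where
  "Delta Kinf Ainf r z =
     mat z - (LINT xi|lborel. cscale (exp (z * of_real xi)) (Kinf xi))
           - (\<Sum>\<^sub>\<infinity>j. cscale (exp (z * of_real (r j))) (Ainf j))"

text \<open>Coefficients: A j t = A_j(t); kernel: K xi t = K(xi;t); shifts r j = r_j.\<close>

definition HA :: "real \<Rightarrow> (int \<Rightarrow> real) \<Rightarrow> (int \<Rightarrow> real \<Rightarrow> complex^'m^'m) \<Rightarrow> bool" where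
  "HA eta r A \<longleftrightarrow>
     (\<forall>j. bounded (range (A j)) \<and> A j C1_differentiable_on UNIV) \<and>
     (\<lambda>j. (SUP t. norm (A j t)) * exp (eta * \<bar>r j\<bar>)) summable_on UNIV \<and>
     closed (range r) \<and> 0 \<in> range r"

definition HK :: "real \<Rightarrow> (real \<Rightarrow> real \<Rightarrow> complex^'m^'m) \<Rightarrow> bool" where
  "HK eta K \<longleftrightarrow>
     (\<exists>DK. wL1_C1 eta (\<lambda>t xi. K xi t) DK \<and>
        bdd_above (range (\<lambda>t. wnorm eta (\<lambda>xi. K xi t))) \<and>
        bdd_above (range (\<lambda>t. wnorm eta (DK t)))) \<and>
     (\<exists>DKs. wL1_deriv eta (\<lambda>t xi. K xi (t - xi)) DKs \<and>
        bdd_above (range (\<lambda>t. wnorm eta (\<lambda>xi. K xi (t - xi)))) \<and>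
        bdd_above (range (\<lambda>t. wnorm eta (DKs t))))"

definition HH :: "real \<Rightarrow> (int \<Rightarrow> real) \<Rightarrow> (int \<Rightarrow> real \<Rightarrow> complex^'m^'m)
    \<Rightarrow> (real \<Rightarrow> real \<Rightarrow> complex^'m^'m) \<Rightarrow> bool" where
  "HH eta r A K \<longleftrightarrow>
     (\<exists>Ap Am Kp Km.
        (\<forall>j. (A j \<longlongrightarrow> Ap j) at_top) \<and> (\<forall>j. (A j \<longlongrightarrow> Am j) at_bot) \<and>
        (\<forall>xi. ((\<lambda>t. K xi t) \<longlongrightarrow> Kp xi) at_top) \<and>
        (\<forall>xi. ((\<lambda>t. K xi t) \<longlongrightarrow> Km xi) at_bot) \<and>
        ((\<lambda>t. \<Sum>\<^sub>\<infinity>j. norm (A j t - Ap j) * exp (eta * \<bar>r j\<bar>)) \<longlongrightarrow> 0) at_top \<and>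
        ((\<lambda>t. \<Sum>\<^sub>\<infinity>j. norm (A j t - Am j) * exp (eta * \<bar>r j\<bar>)) \<longlongrightarrow> 0) at_bot \<and>
        ((\<lambda>t. wnorm eta (\<lambda>xi. K xi t - Kp xi)) \<longlongrightarrow> 0) at_top \<and>
        ((\<lambda>t. wnorm eta (\<lambda>xi. K xi t - Km xi)) \<longlongrightarrow> 0) at_bot \<and>
        ((\<lambda>t. wnorm eta (\<lambda>xi. K xi (t - xi) - Kp xi)) \<longlongrightarrow> 0) at_top \<and>
        ((\<lambda>t. wnorm eta (\<lambda>xi. K xi (t - xi) - Km xi)) \<longlongrightarrow> 0) at_bot \<and>
        (\<forall>y::real. det (Delta Kp Ap r (\<i> * of_real y)) \<noteq> 0) \<and>
        (\<forall>y::real. det (Delta Km Am r (\<i> * of_real y)) \<noteq> 0))"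

definition Hb :: "(int \<Rightarrow> real) \<Rightarrow> (int \<Rightarrow> real \<Rightarrow> complex^'m^'m) \<Rightarrow> (real \<Rightarrow> real \<Rightarrow> complex^'m^'m)
    \<Rightarrow> int \<Rightarrow> (int \<Rightarrow> complex^'m^'m) \<Rightarrow> (real \<Rightarrow> complex^'m^'m) \<Rightarrow> bool" where
  "Hb r A K Kc Atil Ktil \<longleftrightarrow> Kc \<ge> 1 \<and>
     (\<forall>j. r j = of_int j) \<and>
     (\<forall>j. \<bar>j\<bar> \<ge> Kc \<longrightarrow> diag_matrix (Atil j) \<and> (\<forall>t. A j t = Atil j)) \<and>
     (\<forall>xi. \<bar>xi\<bar> \<ge> of_int Kc \<longrightarrow> diag_matrix (Ktil xi) \<and> (\<forall>t. K xi t = Ktil xi))"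

definition HSh1 :: "(int \<Rightarrow> real) \<Rightarrow> (int \<Rightarrow> real \<Rightarrow> complex^'m^'m) \<Rightarrow> (real \<Rightarrow> real \<Rightarrow> complex^'m^'m)
    \<Rightarrow> int \<Rightarrow> (int \<Rightarrow> complex^'m^'m) \<Rightarrow> (real \<Rightarrow> complex^'m^'m) \<Rightarrow> bool" where
  "HSh1 r A K Kc Atil Ktil \<longleftrightarrow> Hb r A K Kc Atil Ktil \<and>
     (\<forall>t xi. \<bar>xi\<bar> > of_int Kc \<longrightarrow> K xi t = 0)"

definition l2seq :: "(nat \<Rightarrow> complex) \<Rightarrow> bool" where
  "l2seq a \<longleftrightarrow> summable (\<lambda>n. (cmod (a n))\<^sup>2)"

definition l2norm :: "(nat \<Rightarrow> complex) \<Rightarrow> real" where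
  "l2norm a = sqrt (\<Sum>n. (cmod (a n))\<^sup>2)"

definition bshift :: "(nat \<Rightarrow> complex) \<Rightarrow> (nat \<Rightarrow> complex)" where
  "bshift a = (\<lambda>n. a (Suc n))"

definition seq_scale :: "complex \<Rightarrow> (nat \<Rightarrow> complex) \<Rightarrow> (nat \<Rightarrow> complex)" where
  "seq_scale c a = (\<lambda>n. c * a n)"

abbreviation cspan :: "(nat \<Rightarrow> complex) set \<Rightarrow> (nat \<Rightarrow> complex) set" where
  "cspan X \<equiv> module.span seq_scale X"

definition shift_orbit :: "(nat \<Rightarrow> complex) \<Rightarrow> (nat \<Rightarrow> complex) set" where
  "shift_orbit a = {(bshift ^^ N) a | N. True}"

definition infinite_dim_span :: "(nat \<Rightarrow> complex) set \<Rightarrow> bool" where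
  "infinite_dim_span X \<longleftrightarrow> \<not> (\<exists>B. finite B \<and> cspan X \<subseteq> cspan B)"

definition cyclic_bshift :: "(nat \<Rightarrow> complex) \<Rightarrow> bool" where
  "cyclic_bshift a \<longleftrightarrow> l2seq a \<and>
     (\<forall>b. l2seq b \<longrightarrow> (\<forall>e>0. \<exists>v\<in>cspan (shift_orbit a). l2norm (\<lambda>n. b n - v n) < e))"

end

theory Submission
  imports Defs "HOL-Complex_Analysis.Complex_Analysis"
begin
lemma sum_fun_apply': "(sum f A) x = (\<Sum>i\<in>A. f i x)"
  by (induction A rule: infinite_finite_induct) auto

lemma vs_seq: "vector_space seq_scale"
  unfolding vector_space_def seq_scale_def
  by (auto simp: fun_eq_iff algebra_simps)

lemma funpow_bshift: "(bshift ^^ N) a = (\<lambda>n. a (N + n))"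
  by (induction N arbitrary: a) (auto simp: bshift_def)

lemma orbit_in: "(bshift ^^ N) a \<in> shift_orbit a"
  unfolding shift_orbit_def by blast

lemma span_lin:
  assumes "v \<in> cspan X" "L 0 = 0" "\<And>c x y. L (seq_scale c x + y) = c * L x + L y"
    "\<And>x. x \<in> X \<Longrightarrow> L x = 0"
  shows "L v = 0"
proof -
  interpret vector_space seq_scale by (rule vs_seq)
  show ?thesis using assms(1)
  proof (induction rule: span_induct_alt)
    case base show ?case by (rule assms(2))
  next
    case (step c x y) show ?case by (simp only: assms(3) assms(4)[OF step(1)] step(2)) simp
  qed
qed

lemma rec_findim:
  assumes pd: "p d \<noteq> 0" and rec: "\<forall>n\<ge>n0. (\<Sum>i\<le>d. p i * a (n+i)) = 0"
  shows "\<not> infinite_dim_span (shift_orbit a)"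
proof -
  interpret vector_space seq_scale by (rule vs_seq)
  define F where "F = (\<lambda>i. (bshift ^^ i) a) ` {..<n0+d}"
  have "(bshift ^^ N) a \<in> cspan F" for N
  proof (induction N rule: less_induct)
    case (less N)
    show ?case
    proof (cases "N < n0 + d")
      case True then show ?thesis unfolding F_def by (intro span_base) auto
    next
      case False
      then obtain m where m: "N = m + d" "m \<ge> n0" by (intro that[of "N - d"]) auto
      have eq: "(bshift ^^ N) a = (\<Sum>i<d. seq_scale (- p i / p d) ((bshift ^^ (m+i)) a))"
      proof (rule ext)
        fix n
        have "(\<Sum>i\<le>d. p i * a (m+n+i)) = 0" using rec[rule_format, of "m+n"] m(2) by simp
        then have "p d * a (m+n+d) = - (\<Sum>i<d. p i * a (m+n+i))"
          by (simp add: lessThan_Suc_atMost[symmetric] add_eq_0_iff)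
        then have "a (m+n+d) = - (\<Sum>i<d. p i * a (m+n+i)) / p d"
          using pd by (simp add: field_simps)
        also have "\<dots> = (\<Sum>i<d. (- p i / p d) * a (m+n+i))"
          by (simp add: sum_divide_distrib sum_negf[symmetric])
        finally have "a (m+n+d) = (\<Sum>i<d. (- p i / p d) * a (m+n+i))" .
        then show "(bshift ^^ N) a n = (\<Sum>i<d. seq_scale (- p i / p d) ((bshift ^^ (m+i)) a)) n"
          by (simp add: sum_fun_apply' funpow_bshift seq_scale_def m ac_simps)
      qed
      have "(\<Sum>i<d. seq_scale (- p i / p d) ((bshift ^^ (m+i)) a)) \<in> cspan F"
        using m pd by (intro span_sum span_scale less.IH) auto
      then show ?thesis using eq by (simp only:)
    qed
  qed
  then have "shift_orbit a \<subseteq> cspan F" unfolding shift_orbit_def by auto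
  then have "cspan (shift_orbit a) \<subseteq> cspan F" using span_minimal subspace_span by blast
  then show ?thesis unfolding infinite_dim_span_def F_def by blast
qed

lemma span_induct_seq:
  assumes "v \<in> cspan X" "P 0" "\<And>c x y. x \<in> X \<Longrightarrow> P y \<Longrightarrow> P (seq_scale c x + y)"
  shows "P v"
proof -
  interpret vector_space seq_scale by (rule vs_seq)
  show ?thesis using assms(1)
  proof (induction rule: span_induct_alt)
    case base show ?case by (rule assms(2))
  next
    case (step c x y) show ?case using assms(3) step by blast
  qed
qed

lemma sq_add_le: "(cmod (x + y))\<^sup>2 \<le> 2 * (cmod x)\<^sup>2 + 2 * (cmod y)\<^sup>2"
proof -
  have "(cmod (x + y))\<^sup>2 \<le> (cmod x + cmod y)\<^sup>2"
    by (intro power_mono norm_triangle_ineq) auto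
  also have "\<dots> \<le> 2 * (cmod x)\<^sup>2 + 2 * (cmod y)\<^sup>2"
    using zero_le_power2[of "cmod x - cmod y"] by (simp only: power2_eq_square algebra_simps)
  finally show ?thesis .
qed

lemma l2seq_add: "l2seq x \<Longrightarrow> l2seq y \<Longrightarrow> l2seq (\<lambda>n. x n + y n)"
  unfolding l2seq_def
  by (rule summable_comparison_test[where g="\<lambda>n. 2 * (cmod (x n))\<^sup>2 + 2 * (cmod (y n))\<^sup>2"])
     (auto intro!: summable_add summable_mult sq_add_le)

lemma l2seq_scale: "l2seq x \<Longrightarrow> l2seq (\<lambda>n. c * x n)"
  unfolding l2seq_def by (simp add: norm_mult power_mult_distrib summable_mult)

lemma l2seq_uminus: "l2seq x \<Longrightarrow> l2seq (\<lambda>n. - x n)"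
  unfolding l2seq_def by simp

lemma l2seq_diff: "l2seq x \<Longrightarrow> l2seq y \<Longrightarrow> l2seq (\<lambda>n. x n - y n)"
  using l2seq_add[of x "\<lambda>n. - y n"] l2seq_uminus[of y] by simp

lemma l2seq_zero: "l2seq (\<lambda>n. 0)"
  unfolding l2seq_def by simp

lemma l2seq_shift: "l2seq a \<Longrightarrow> l2seq ((bshift ^^ N) a)"
  unfolding l2seq_def funpow_bshift
  using summable_iff_shift[of "\<lambda>n. (cmod (a n))\<^sup>2" N] by (simp add: add.commute)

lemma l2seq_span:
  assumes "v \<in> cspan X" "\<And>x. x \<in> X \<Longrightarrow> l2seq x"
  shows "l2seq v"
  using assms(1)
proof (rule span_induct_seq)
  show "l2seq 0" using l2seq_zero by (simp add: zero_fun_def)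
next
  fix c x y assume "x \<in> X" "l2seq y"
  then show "l2seq (seq_scale c x + y)"
    using l2seq_add[OF l2seq_scale[OF assms(2)[OF \<open>x \<in> X\<close>]] \<open>l2seq y\<close>, of c]
    by (simp add: seq_scale_def plus_fun_def)
qed

lemma l2seq_orbit_span: "l2seq a \<Longrightarrow> v \<in> cspan (shift_orbit a) \<Longrightarrow> l2seq v"
  by (rule l2seq_span) (auto simp: shift_orbit_def intro: l2seq_shift)

lemma coord_le_l2norm:
  assumes "l2seq x" shows "cmod (x i) \<le> l2norm x"
proof -
  have "(cmod (x i))\<^sup>2 \<le> (\<Sum>n. (cmod (x n))\<^sup>2)"
    using sum_le_suminf[of "\<lambda>n. (cmod (x n))\<^sup>2" "{i}"] assms unfolding l2seq_def by auto
  then show ?thesis unfolding l2norm_def by (simp add: real_le_rsqrt)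
qed

lemma span_lin':
  assumes "v \<in> cspan X" "\<And>x. x \<in> X \<Longrightarrow> (\<Sum>i\<le>d. p i * x i) = 0"
  shows "(\<Sum>i\<le>d. p i * v i) = 0"
  using assms(1)
proof (rule span_induct_seq)
  show "(\<Sum>i\<le>d. p i * 0 i) = 0" by simp
next
  fix c x y assume "x \<in> X" "(\<Sum>i\<le>d. p i * y i) = 0"
  then show "(\<Sum>i\<le>d. p i * (seq_scale c x + y) i) = 0"
    using assms(2)[OF \<open>x \<in> X\<close>]
    by (simp add: seq_scale_def algebra_simps sum.distrib sum_distrib_left[symmetric])
qed

lemma rec_not_cyclic:
  assumes pd: "p d \<noteq> 0" and rec: "\<forall>n. (\<Sum>i\<le>d. p i * a (n+i)) = 0"
  shows "\<not> cyclic_bshift a"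
proof
  assume cyc: "cyclic_bshift a"
  then have la: "l2seq a" unfolding cyclic_bshift_def by blast
  define b where "b = (\<lambda>n. if n = d then (1::complex) else 0)"
  have lb: "l2seq b" unfolding l2seq_def b_def
    by (rule summable_finite[of "{d}"]) auto
  define S where "S = (\<Sum>i\<le>d. cmod (p i))"
  have S0: "S \<ge> 0" unfolding S_def by (simp add: sum_nonneg)
  define e where "e = cmod (p d) / (1 + S)"
  have e0: "e > 0" unfolding e_def using pd S0 by simp
  obtain v where v: "v \<in> cspan (shift_orbit a)" and vb: "l2norm (\<lambda>n. b n - v n) < e"
    using cyc lb e0 unfolding cyclic_bshift_def by blast
  have lv: "l2seq v" using l2seq_orbit_span[OF la v] .
  have Lv: "(\<Sum>i\<le>d. p i * v i) = 0"
    by (rule span_lin'[OF v]) (auto simp: shift_orbit_def funpow_bshift rec)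
  have Lb: "(\<Sum>i\<le>d. p i * b i) = p d"
    unfolding b_def by (simp add: if_distrib cong: if_cong)
  have "p d = (\<Sum>i\<le>d. p i * (b i - v i))"
    using Lv Lb by (simp add: right_diff_distrib sum_subtractf)
  then have "cmod (p d) \<le> (\<Sum>i\<le>d. cmod (p i) * cmod (b i - v i))"
    by (metis (no_types, lifting) norm_mult norm_sum sum.cong)
  also have "\<dots> \<le> (\<Sum>i\<le>d. cmod (p i) * l2norm (\<lambda>n. b n - v n))"
    using coord_le_l2norm[OF l2seq_diff[OF lb lv]]
    by (intro sum_mono mult_left_mono) auto
  also have "\<dots> = S * l2norm (\<lambda>n. b n - v n)" unfolding S_def by (simp add: sum_distrib_right)
  also have "\<dots> \<le> S * e" using vb S0 by (intro mult_left_mono) auto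
  also have "\<dots> < cmod (p d)" unfolding e_def using pd S0
    by (simp add: field_simps)
  finally show False by simp
qed

lemma dep_rec:
  assumes fB: "finite B" and sub: "cspan (shift_orbit a) \<subseteq> cspan B"
  shows "\<exists>d p. p d \<noteq> 0 \<and> (\<forall>n. (\<Sum>i\<le>d. p i * a (n+i)) = (0::complex))"
proof -
  interpret vector_space seq_scale by (rule vs_seq)
  define m where "m = card B"
  define f where "f i = (bshift ^^ i) a" for i
  show ?thesis
  proof (cases "inj_on f {..m}")
    case False
    then obtain i j where ij: "i \<le> m" "j \<le> m" "i \<noteq> j" "f i = f j"
      unfolding inj_on_def by auto
    then have "\<exists>i j. i < j \<and> f i = f j"
    proof (cases "i < j")
      case True then show ?thesis using ij(4) by blast
    next
      case False then have "j < i" using ij(3) by simp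
      then show ?thesis using ij(4) by (intro exI[of _ j] exI[of _ i]) simp
    qed
    then obtain i j where ij: "i < j" "f i = f j" by blast
    have eqa: "a (i + n) = a (j + n)" for n
      using fun_cong[OF ij(2), of n] unfolding f_def funpow_bshift .
    define p where "p l = (if l = j then 1 else 0) - (if l = i then (1::complex) else 0)" for l
    have "(\<Sum>l\<le>j. p l * a (n+l)) = 0" for n
    proof -
      have "(\<Sum>l\<le>j. p l * a (n+l)) = (\<Sum>l\<le>j. (if l = j then a (n+l) else 0) - (if l = i then a (n+l) else 0))"
        by (intro sum.cong) (auto simp: p_def)
      also have "\<dots> = a (n+j) - a (n+i)"
        using ij(1) by (simp add: sum_subtractf sum.delta)
      finally show ?thesis using eqa[of n] by (simp add: add.commute)
    qed
    moreover have "p j \<noteq> 0" using ij(1) by (simp add: p_def)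
    ultimately show ?thesis by blast
  next
    case True
    define S where "S = f ` {..m}"
    have cS: "card S = Suc m" unfolding S_def using card_image[OF True] by simp
    have "S \<subseteq> cspan B"
    proof -
      have "S \<subseteq> shift_orbit a" unfolding S_def f_def shift_orbit_def by blast
      also have "\<dots> \<subseteq> cspan (shift_orbit a)" by (rule span_superset)
      finally show ?thesis using sub by (rule order_trans)
    qed
    then have "dependent S"
      using independent_span_bound[OF fB, of S] cS unfolding m_def by linarith
    then obtain t u v0 where t: "finite t" "t \<subseteq> S" "(\<Sum>v\<in>t. seq_scale (u v) v) = 0"
      and v0: "v0 \<in> t" "u v0 \<noteq> 0"
      unfolding dependent_explicit by blast
    define I where "I = {i. i \<le> m \<and> f i \<in> t}"
    define q where "q i = (if i \<le> m \<and> f i \<in> t then u (f i) else 0)" for i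
    have fI: "f ` I = t" using t(2) unfolding I_def S_def by auto
    have injI: "inj_on f I" using True unfolding I_def by (auto intro: inj_on_subset)
    have qsum: "(\<Sum>i\<le>m. q i * a (n+i)) = 0" for n
    proof -
      have "(\<Sum>i\<le>m. q i * a (n+i)) = (\<Sum>i\<in>I. u (f i) * f i n)"
        unfolding q_def I_def f_def funpow_bshift
        by (rule sum.mono_neutral_cong_right) (auto simp: add.commute)
      also have "\<dots> = (\<Sum>v\<in>t. u v * v n)"
        using sum.reindex[OF injI, of "\<lambda>v. u v * v n"] fI by simp
      also have "\<dots> = (\<Sum>v\<in>t. seq_scale (u v) v) n"
        by (simp add: sum_fun_apply' seq_scale_def)
      also have "\<dots> = 0" using t(3) by simp
      finally show ?thesis .
    qed
    obtain i0 where i0: "i0 \<le> m" "f i0 = v0" using v0(1) t(2) unfolding S_def by auto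
    have qi0: "q i0 \<noteq> 0" using i0 v0 unfolding q_def by auto
    define D where "D = {i. i \<le> m \<and> q i \<noteq> 0}"
    have fD: "finite D" "D \<noteq> {}" using i0 qi0 unfolding D_def by auto
    define d where "d = Max D"
    have dD: "d \<in> D" using fD unfolding d_def by (rule Max_in)
    have qz: "q i = 0" if "i > d" for i
    proof (rule ccontr)
      assume "q i \<noteq> 0"
      then have "i \<in> D" unfolding D_def q_def by (auto split: if_splits)
      then have "i \<le> d" unfolding d_def using fD by simp
      then show False using that by simp
    qed
    have "(\<Sum>i\<le>d. q i * a (n+i)) = 0" for n
    proof -
      have "(\<Sum>i\<le>d. q i * a (n+i)) = (\<Sum>i\<le>m. q i * a (n+i))"
        using dD unfolding D_def by (intro sum.mono_neutral_left) (auto simp: qz)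
      then show ?thesis using qsum by simp
    qed
    moreover have "q d \<noteq> 0" using dD unfolding D_def by simp
    ultimately show ?thesis by blast
  qed
qed

definition nsq :: "(nat \<Rightarrow> complex) \<Rightarrow> real" where
  "nsq x = (\<Sum>n. (cmod (x n))\<^sup>2)"
definition rip :: "(nat \<Rightarrow> complex) \<Rightarrow> (nat \<Rightarrow> complex) \<Rightarrow> real" where
  "rip x y = (\<Sum>n. Re (x n * cnj (y n)))"

lemma pt_diff: "(cmod (x - y))\<^sup>2 = (cmod x)\<^sup>2 + (cmod y)\<^sup>2 - 2 * Re (x * cnj y)"
  unfolding cmod_power2 by (simp add: power2_eq_square algebra_simps)

lemma pt_add: "(cmod (x + y))\<^sup>2 = (cmod x)\<^sup>2 + (cmod y)\<^sup>2 + 2 * Re (x * cnj y)"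
  unfolding cmod_power2 by (simp add: power2_eq_square algebra_simps)

lemma rip_summable:
  assumes "l2seq x" "l2seq y" shows "summable (\<lambda>n. Re (x n * cnj (y n)))"
proof -
  have "summable (\<lambda>n. ((cmod (x n))\<^sup>2 + (cmod (y n))\<^sup>2 - (cmod (x n - y n))\<^sup>2) / 2)"
    using assms l2seq_diff[OF assms] unfolding l2seq_def
    by (intro summable_divide summable_diff summable_add) auto
  moreover have "(\<lambda>n. Re (x n * cnj (y n))) = (\<lambda>n. ((cmod (x n))\<^sup>2 + (cmod (y n))\<^sup>2 - (cmod (x n - y n))\<^sup>2) / 2)"
    by (rule ext) (simp add: pt_diff)
  ultimately show ?thesis by (simp only:)
qed

lemma nsq_diff:
  assumes "l2seq x" "l2seq y"
  shows "nsq (\<lambda>n. x n - y n) = nsq x + nsq y - 2 * rip x y"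
proof -
  have s: "summable (\<lambda>n. (cmod (x n))\<^sup>2)" "summable (\<lambda>n. (cmod (y n))\<^sup>2)"
    using assms unfolding l2seq_def by auto
  have r: "summable (\<lambda>n. 2 * Re (x n * cnj (y n)))"
    using rip_summable[OF assms] by (rule summable_mult)
  have "nsq (\<lambda>n. x n - y n) = (\<Sum>n. (cmod (x n))\<^sup>2 + (cmod (y n))\<^sup>2 - 2 * Re (x n * cnj (y n)))"
    unfolding nsq_def by (simp add: pt_diff)
  also have "\<dots> = nsq x + nsq y - 2 * rip x y"
    unfolding nsq_def rip_def
    using suminf_add[OF s] suminf_diff[OF summable_add[OF s] r] suminf_mult[OF rip_summable[OF assms], of 2]
    by simp
  finally show ?thesis .
qed

lemma nsq_add:
  assumes "l2seq x" "l2seq y"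
  shows "nsq (\<lambda>n. x n + y n) = nsq x + nsq y + 2 * rip x y"
proof -
  have s: "summable (\<lambda>n. (cmod (x n))\<^sup>2)" "summable (\<lambda>n. (cmod (y n))\<^sup>2)"
    using assms unfolding l2seq_def by auto
  have r: "summable (\<lambda>n. 2 * Re (x n * cnj (y n)))"
    using rip_summable[OF assms] by (rule summable_mult)
  have "nsq (\<lambda>n. x n + y n) = (\<Sum>n. (cmod (x n))\<^sup>2 + (cmod (y n))\<^sup>2 + 2 * Re (x n * cnj (y n)))"
    unfolding nsq_def by (simp add: pt_add)
  also have "\<dots> = nsq x + nsq y + 2 * rip x y"
    unfolding nsq_def rip_def
    using suminf_add[OF s] suminf_add[OF summable_add[OF s] r] suminf_mult[OF rip_summable[OF assms], of 2]
    by simp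
  finally show ?thesis .
qed

lemma nsq_scale: "l2seq x \<Longrightarrow> nsq (\<lambda>n. c * x n) = (cmod c)\<^sup>2 * nsq x"
  unfolding nsq_def l2seq_def by (simp add: norm_mult power_mult_distrib suminf_mult)

lemma nsq_nonneg: "l2seq x \<Longrightarrow> nsq x \<ge> 0"
  unfolding nsq_def l2seq_def by (rule suminf_nonneg) auto

lemma l2norm_nsq: "l2norm x = sqrt (nsq x)"
  unfolding l2norm_def nsq_def ..

lemma rip_scale_real:
  assumes "l2seq x" "l2seq y"
  shows "rip x (\<lambda>n. of_real t * y n) = t * rip x y"
proof -
  have "rip x (\<lambda>n. of_real t * y n) = (\<Sum>n. t * Re (x n * cnj (y n)))"
    unfolding rip_def by (simp add: algebra_simps)
  also have "\<dots> = t * rip x y"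
    unfolding rip_def by (rule suminf_mult[OF rip_summable[OF assms]])
  finally show ?thesis .
qed

lemma eps_small:
  assumes "r > 0" shows "\<exists>M. \<forall>k\<ge>M. sqrt (4 / (real k + 1)) < r"
proof -
  obtain M :: nat where M: "4 / r\<^sup>2 < real M" using reals_Archimedean2 by blast
  have "sqrt (4 / (real k + 1)) < r" if "k \<ge> M" for k
  proof -
    have r2: "r\<^sup>2 > 0" using assms by simp
    have "4 / r\<^sup>2 < real k + 1" using M that by linarith
    then have "4 < r\<^sup>2 * (real k + 1)" using r2 by (simp add: field_simps)
    then have "4 / (real k + 1) < r\<^sup>2" by (simp add: field_simps)
    then have "sqrt (4 / (real k + 1)) < sqrt (r\<^sup>2)" by (rule real_sqrt_less_mono)
    then show ?thesis using assms by simp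
  qed
  then show ?thesis by blast
qed

lemma eps_tendsto: "(\<lambda>k. sqrt (4 / (real k + 1))) \<longlonglongrightarrow> 0"
proof (rule LIMSEQ_I)
  fix r :: real assume "r > 0"
  then obtain M where "\<forall>k\<ge>M. sqrt (4 / (real k + 1)) < r" using eps_small by blast
  then show "\<exists>no. \<forall>n\<ge>no. norm (sqrt (4 / (real n + 1)) - 0) < r" by auto
qed

lemma two_bound:
  assumes "k \<ge> M" "j \<ge> M"
  shows "2 / (real k + 1) + 2 / (real j + 1) \<le> 4 / (real M + 1)"
proof -
  have "2 / (real k + 1) \<le> 2 / (real M + 1)" using assms by (intro divide_left_mono) auto
  moreover have "2 / (real j + 1) \<le> 2 / (real M + 1)" using assms by (intro divide_left_mono) auto
  ultimately show ?thesis by simp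
qed

lemma rip_zero_aux:
  fixes r N :: real
  assumes N: "N \<ge> 0" and H: "\<And>t. 2 * t * r \<le> t\<^sup>2 * N"
  shows "r = 0"
proof (rule ccontr)
  assume r: "r \<noteq> 0"
  define t where "t = r / (N + 1)"
  have n1: "N + 1 \<noteq> 0" using N by linarith
  have tN: "t * (N + 1) = r" unfolding t_def using n1 by simp
  have "2 * t * r * (N + 1)\<^sup>2 \<le> t\<^sup>2 * N * (N + 1)\<^sup>2"
    using H[of t] by (intro mult_right_mono) auto
  moreover have "2 * t * r * (N + 1)\<^sup>2 = 2 * r\<^sup>2 * (N + 1)"
    by (simp add: power2_eq_square tN[symmetric] algebra_simps)
  moreover have "t\<^sup>2 * N * (N + 1)\<^sup>2 = r\<^sup>2 * N"
    by (simp add: power2_eq_square tN[symmetric] algebra_simps)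
  ultimately have "2 * r\<^sup>2 * (N + 1) \<le> r\<^sup>2 * N" by linarith
  moreover have "r\<^sup>2 * (N + 2) = 2 * r\<^sup>2 * (N + 1) - r\<^sup>2 * N" by (simp add: algebra_simps)
  ultimately have "r\<^sup>2 * (N + 2) \<le> 0" by linarith
  moreover have "r\<^sup>2 * (N + 2) > 0" using r N by (intro mult_pos_pos) auto
  ultimately show False by linarith
qed

lemma hilbert:
  fixes V :: "(nat \<Rightarrow> complex) set" and b :: "nat \<Rightarrow> complex"
  assumes V0: "(\<lambda>n. 0) \<in> V"
    and Vadd: "\<And>v w. v \<in> V \<Longrightarrow> w \<in> V \<Longrightarrow> (\<lambda>n. v n + w n) \<in> V"
    and Vsc: "\<And>v c. v \<in> V \<Longrightarrow> (\<lambda>n. c * v n) \<in> V"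
    and Vl2: "\<And>v. v \<in> V \<Longrightarrow> l2seq v"
    and lb: "l2seq b" and e0: "e > 0"
    and far: "\<And>v. v \<in> V \<Longrightarrow> e \<le> l2norm (\<lambda>n. b n - v n)"
  shows "\<exists>c. (\<exists>C. \<forall>n. cmod (c n) \<le> C) \<and> (\<exists>n. c n \<noteq> 0) \<and>
           (\<forall>u\<in>V. summable (\<lambda>n. cmod (u n)) \<longrightarrow> rip c u = 0)"
proof -
  define F where "F v = nsq (\<lambda>n. b n - v n)" for v
  have lbv: "l2seq (\<lambda>n. b n - v n)" if "v \<in> V" for v using l2seq_diff[OF lb Vl2[OF that]] .
  have Fl: "e\<^sup>2 \<le> F v" if "v \<in> V" for v
  proof -
    have "F v \<ge> 0" unfolding F_def using nsq_nonneg[OF lbv[OF that]] .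
    moreover have "e \<le> sqrt (F v)" using far[OF that] unfolding F_def l2norm_nsq .
    then have "e\<^sup>2 \<le> (sqrt (F v))\<^sup>2" using e0 by (intro power_mono) auto
    ultimately show ?thesis by simp
  qed
  define \<delta> where "\<delta> = Inf (F ` V)"
  have ne: "F ` V \<noteq> {}" using V0 by blast
  have bdd: "bdd_below (F ` V)" using Fl by (intro bdd_belowI[of _ "e\<^sup>2"]) auto
  have Fd: "\<delta> \<le> F v" if "v \<in> V" for v unfolding \<delta>_def using bdd that by (intro cInf_lower) auto
  have de: "e\<^sup>2 \<le> \<delta>" unfolding \<delta>_def using ne Fl by (intro cInf_greatest) auto
  have "\<forall>k. \<exists>v. v \<in> V \<and> F v < \<delta> + 1 / (real k + 1)"
  proof
    fix k
    have "Inf (F ` V) < \<delta> + 1 / (real k + 1)" unfolding \<delta>_def by (simp add: add_pos_pos)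
    from cInf_lessD[OF ne this] show "\<exists>v. v \<in> V \<and> F v < \<delta> + 1 / (real k + 1)" by blast
  qed
  from choice[OF this] obtain v where vVF: "\<forall>k. v k \<in> V \<and> F (v k) < \<delta> + 1 / (real k + 1)"
    by blast
  have vV: "\<And>k. v k \<in> V" and vF: "\<And>k. F (v k) < \<delta> + 1 / (real k + 1)" using vVF by auto
  define w where "w k = (\<lambda>n. b n - v k n)" for k
  have lw: "l2seq (w k)" for k unfolding w_def by (rule lbv[OF vV])
  have wF: "nsq (w k) < \<delta> + 1 / (real k + 1)" for k using vF[of k] unfolding F_def w_def .
  have par: "nsq (\<lambda>n. w k n - w j n) \<le> 2 / (real k + 1) + 2 / (real j + 1)" for k j
  proof -
    define m where "m = (\<lambda>n. (1/2) * (v k n + v j n))"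
    have mV: "m \<in> V" unfolding m_def using Vsc[OF Vadd[OF vV vV]] .
    have lm: "l2seq (\<lambda>n. b n - m n)" by (rule lbv[OF mV])
    have sum_eq: "(\<lambda>n. w k n + w j n) = (\<lambda>n. 2 * (b n - m n))"
      by (rule ext) (simp add: w_def m_def algebra_simps)
    have "nsq (\<lambda>n. w k n + w j n) = 4 * F m"
      unfolding sum_eq F_def using nsq_scale[OF lm, of 2] by simp
    moreover have "nsq (\<lambda>n. w k n - w j n) + nsq (\<lambda>n. w k n + w j n) = 2 * nsq (w k) + 2 * nsq (w j)"
      using nsq_diff[OF lw[of k] lw[of j]] nsq_add[OF lw[of k] lw[of j]] by simp
    moreover have "\<delta> \<le> F m" using Fd[OF mV] .
    ultimately show ?thesis using wF[of k] wF[of j] by linarith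
  qed
  define \<epsilon> where "\<epsilon> k = sqrt (4 / (real k + 1))" for k
  have coord: "cmod (w k n - w j n) \<le> \<epsilon> M" if "k \<ge> M" "j \<ge> M" for k j n M
  proof -
    have "cmod (w k n - w j n) \<le> l2norm (\<lambda>n. w k n - w j n)"
      using coord_le_l2norm[OF l2seq_diff[OF lw lw]] .
    also have "\<dots> \<le> sqrt (2 / (real k + 1) + 2 / (real j + 1))"
      unfolding l2norm_nsq using par by (rule real_sqrt_le_mono)
    also have "\<dots> \<le> \<epsilon> M" unfolding \<epsilon>_def using two_bound[OF that] by (rule real_sqrt_le_mono)
    finally show ?thesis .
  qed
  have cau: "Cauchy (\<lambda>k. w k n)" for n
  proof (rule CauchyI)
    fix r :: real assume "r > 0"
    then obtain M where M: "\<forall>k\<ge>M. \<epsilon> k < r" using eps_small unfolding \<epsilon>_def by blast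
    show "\<exists>M. \<forall>m\<ge>M. \<forall>na\<ge>M. norm (w m n - w na n) < r"
    proof (intro exI[of _ M] allI impI)
      fix m na assume "M \<le> m" "M \<le> na"
      then have "cmod (w m n - w na n) \<le> \<epsilon> M" by (rule coord)
      moreover have "\<epsilon> M < r" using M by simp
      ultimately show "norm (w m n - w na n) < r" by simp
    qed
  qed
  define c where "c n = lim (\<lambda>k. w k n)" for n
  have wc: "(\<lambda>k. w k n) \<longlonglongrightarrow> c n" for n
    using cau[of n] unfolding c_def Cauchy_convergent_iff convergent_LIMSEQ_iff .
  have wcb: "cmod (w k n - c n) \<le> \<epsilon> k" for k n
  proof (rule LIMSEQ_le_const2)
    show "(\<lambda>j. cmod (w k n - w j n)) \<longlonglongrightarrow> cmod (w k n - c n)"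
      by (intro tendsto_intros wc)
    show "\<exists>N. \<forall>j\<ge>N. cmod (w k n - w j n) \<le> \<epsilon> k"
      using coord[of k k] by (intro exI[of _ k]) auto
  qed
  have cbound: "\<exists>C. \<forall>n. cmod (c n) \<le> C"
  proof (intro exI allI)
    fix n
    have "cmod (c n) \<le> cmod (w 0 n) + cmod (c n - w 0 n)" by (rule norm_triangle_sub)
    then have "cmod (c n) \<le> cmod (w 0 n) + cmod (w 0 n - c n)" by (simp add: norm_minus_commute)
    also have "\<dots> \<le> l2norm (w 0) + \<epsilon> 0"
      using coord_le_l2norm[OF lw] wcb by (intro add_mono) auto
    finally show "cmod (c n) \<le> l2norm (w 0) + \<epsilon> 0" .
  qed
  have cnz: "\<exists>n. c n \<noteq> 0"
  proof (rule ccontr)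
    assume "\<not> (\<exists>n. c n \<noteq> 0)"
    then have c0: "\<And>n. c n = 0" by auto
    obtain k where "\<epsilon> k < e" using eps_small[OF e0] unfolding \<epsilon>_def by blast
    then have "(\<epsilon> k)\<^sup>2 < e\<^sup>2" unfolding \<epsilon>_def by (intro power_strict_mono) auto
    then have k: "4 / (real k + 1) < e\<^sup>2" unfolding \<epsilon>_def by simp
    have "nsq (w k) \<le> 4 / (real k + 1)"
      unfolding nsq_def
    proof (rule suminf_le_const)
      show "summable (\<lambda>n. (cmod (w k n))\<^sup>2)" using lw[of k] unfolding l2seq_def .
      fix M
      show "(\<Sum>n<M. (cmod (w k n))\<^sup>2) \<le> 4 / (real k + 1)"
      proof (rule LIMSEQ_le_const2)
        have "(\<lambda>j. \<Sum>n<M. (cmod (w k n - w j n))\<^sup>2) \<longlonglongrightarrow> (\<Sum>n<M. (cmod (w k n - c n))\<^sup>2)"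
          by (intro tendsto_intros wc)
        then show "(\<lambda>j. \<Sum>n<M. (cmod (w k n - w j n))\<^sup>2) \<longlonglongrightarrow> (\<Sum>n<M. (cmod (w k n))\<^sup>2)"
          by (simp add: c0)
        show "\<exists>N. \<forall>j\<ge>N. (\<Sum>n<M. (cmod (w k n - w j n))\<^sup>2) \<le> 4 / (real k + 1)"
        proof (intro exI[of _ k] allI impI)
          fix j assume j: "k \<le> j"
          have "(\<Sum>n<M. (cmod (w k n - w j n))\<^sup>2) \<le> nsq (\<lambda>n. w k n - w j n)"
            unfolding nsq_def using l2seq_diff[OF lw[of k] lw[of j]] unfolding l2seq_def
            by (intro sum_le_suminf) auto
          also have "\<dots> \<le> 2 / (real k + 1) + 2 / (real j + 1)" by (rule par)
          also have "\<dots> \<le> 4 / (real k + 1)" using two_bound[of k k j] j by simp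
          finally show "(\<Sum>n<M. (cmod (w k n - w j n))\<^sup>2) \<le> 4 / (real k + 1)" .
        qed
      qed
    qed
    moreover have "\<delta> \<le> nsq (w k)" using Fd[OF vV[of k]] unfolding F_def w_def .
    ultimately show False using de k by linarith
  qed
  have orth: "rip c u = 0" if uV: "u \<in> V" and u1: "summable (\<lambda>n. cmod (u n))" for u
  proof -
    have lu: "l2seq u" using Vl2[OF uV] .
    obtain C where C: "\<And>n. cmod (c n) \<le> C" using cbound by blast
    have sc: "summable (\<lambda>n. Re (c n * cnj (u n)))"
    proof (rule summable_comparison_test[OF _ summable_mult[OF u1, of C]])
      show "\<exists>N. \<forall>n\<ge>N. norm (Re (c n * cnj (u n))) \<le> C * cmod (u n)"
      proof (intro exI allI impI)
        fix n
        have "norm (Re (c n * cnj (u n))) \<le> cmod (c n * cnj (u n))" unfolding real_norm_def by (rule abs_Re_le_cmod)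
        also have "\<dots> = cmod (c n) * cmod (u n)" by (simp add: norm_mult)
        also have "\<dots> \<le> C * cmod (u n)" using C by (intro mult_right_mono) auto
        finally show "norm (Re (c n * cnj (u n))) \<le> C * cmod (u n)" .
      qed
    qed
    have ineq: "2 * t * rip (w k) u < 1 / (real k + 1) + t\<^sup>2 * nsq u" for t k
    proof -
      define v' where "v' = (\<lambda>n. v k n + of_real t * u n)"
      have "v' \<in> V" using Vadd[OF vV Vsc[OF uV]] unfolding v'_def .
      then have "\<delta> \<le> F v'" by (rule Fd)
      also have "F v' = nsq (\<lambda>n. w k n - of_real t * u n)"
        unfolding F_def v'_def w_def by (simp add: algebra_simps)
      also have "\<dots> = nsq (w k) + t\<^sup>2 * nsq u - 2 * t * rip (w k) u"
        using nsq_diff[OF lw[of k] l2seq_scale[OF lu, of "of_real t"]] nsq_scale[OF lu, of "of_real t"]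
          rip_scale_real[OF lw[of k] lu, of t] by simp
      finally show ?thesis using wF[of k] by linarith
    qed
    define S where "S = (\<Sum>n. cmod (u n))"
    have bnd: "norm (rip (w k) u - rip c u) \<le> \<epsilon> k * S" for k
    proof -
      have s1: "summable (\<lambda>n. Re (w k n * cnj (u n)))" by (rule rip_summable[OF lw lu])
      have e1: "rip (w k) u - rip c u = (\<Sum>n. Re ((w k n - c n) * cnj (u n)))"
        unfolding rip_def using suminf_diff[OF s1 sc] by (simp add: algebra_simps)
      have pt: "\<bar>Re ((w k n - c n) * cnj (u n))\<bar> \<le> \<epsilon> k * cmod (u n)" for n
      proof -
        have "\<bar>Re ((w k n - c n) * cnj (u n))\<bar> \<le> cmod ((w k n - c n) * cnj (u n))" by (rule abs_Re_le_cmod)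
        also have "\<dots> = cmod (w k n - c n) * cmod (u n)" by (simp add: norm_mult)
        also have "\<dots> \<le> \<epsilon> k * cmod (u n)" using wcb by (intro mult_right_mono) auto
        finally show ?thesis .
      qed
      have sg: "summable (\<lambda>n. \<epsilon> k * cmod (u n))" using u1 by (rule summable_mult)
      have sa: "summable (\<lambda>n. \<bar>Re ((w k n - c n) * cnj (u n))\<bar>)"
        by (rule summable_comparison_test[OF _ sg]) (use pt in auto)
      have "\<bar>\<Sum>n. Re ((w k n - c n) * cnj (u n))\<bar> \<le> (\<Sum>n. \<bar>Re ((w k n - c n) * cnj (u n))\<bar>)"
        by (rule summable_rabs[OF sa])
      also have "\<dots> \<le> (\<Sum>n. \<epsilon> k * cmod (u n))" by (rule suminf_le[OF pt sa sg])
      also have "\<dots> = \<epsilon> k * S" unfolding S_def by (rule suminf_mult[OF u1])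
      finally show ?thesis using e1 by simp
    qed
    have conv0: "(\<lambda>k. rip (w k) u - rip c u) \<longlonglongrightarrow> 0"
    proof (rule Lim_null_comparison)
      show "\<forall>\<^sub>F k in sequentially. norm (rip (w k) u - rip c u) \<le> \<epsilon> k * S" using bnd by simp
      show "(\<lambda>k. \<epsilon> k * S) \<longlonglongrightarrow> 0"
        using tendsto_mult[OF eps_tendsto tendsto_const[of S]] unfolding \<epsilon>_def by simp
    qed
    have conv: "(\<lambda>k. rip (w k) u) \<longlonglongrightarrow> rip c u"
      using tendsto_add[OF conv0 tendsto_const[of "rip c u"]] by simp
    have inv0: "(\<lambda>k. 1 / (real k + 1)) \<longlonglongrightarrow> 0"
      using LIMSEQ_inverse_real_of_nat by (simp add: inverse_eq_divide add.commute)
    have H: "2 * t * rip c u \<le> t\<^sup>2 * nsq u" for t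
    proof (rule tendsto_le[OF trivial_limit_sequentially])
      show "(\<lambda>k. 1 / (real k + 1) + t\<^sup>2 * nsq u) \<longlonglongrightarrow> t\<^sup>2 * nsq u"
        using tendsto_add[OF inv0 tendsto_const[of "t\<^sup>2 * nsq u"]] by simp
      show "(\<lambda>k. 2 * t * rip (w k) u) \<longlonglongrightarrow> 2 * t * rip c u" by (intro tendsto_intros conv)
      show "\<forall>\<^sub>F k in sequentially. 2 * t * rip (w k) u \<le> 1 / (real k + 1) + t\<^sup>2 * nsq u"
        using ineq by (intro always_eventually allI less_imp_le)
    qed
    show ?thesis by (rule rip_zero_aux[OF nsq_nonneg[OF lu] H])
  qed
  show ?thesis using cbound cnz orth by blast
qed

lemma orth_vec:
  assumes la: "l2seq a" and a1: "summable (\<lambda>n. cmod (a n))" and nc: "\<not> cyclic_bshift a"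
  shows "\<exists>\<beta>. (\<exists>C. \<forall>n. cmod (\<beta> n) \<le> C) \<and> (\<exists>n. \<beta> n \<noteq> 0) \<and> (\<forall>N. (\<lambda>n. \<beta> n * a (n+N)) sums 0)"
proof -
  interpret vector_space seq_scale by (rule vs_seq)
  define V where "V = cspan (shift_orbit a)"
  obtain b e where lb: "l2seq b" and e0: "e > 0" and far: "\<And>v. v \<in> V \<Longrightarrow> e \<le> l2norm (\<lambda>n. b n - v n)"
  proof -
    from nc la obtain b where "l2seq b" "\<not> (\<forall>e>0. \<exists>v\<in>V. l2norm (\<lambda>n. b n - v n) < e)"
      unfolding cyclic_bshift_def V_def by blast
    then obtain e where "l2seq b" "e > 0" "\<forall>v\<in>V. \<not> l2norm (\<lambda>n. b n - v n) < e" by blast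
    then show ?thesis using that by (meson not_less)
  qed
  have V0: "(\<lambda>n. 0) \<in> V" unfolding V_def using span_zero by (simp add: zero_fun_def)
  have Vadd: "(\<lambda>n. v n + w n) \<in> V" if "v \<in> V" "w \<in> V" for v w
    using span_add[OF that[unfolded V_def]] unfolding V_def by (simp add: plus_fun_def)
  have Vsc: "(\<lambda>n. c * v n) \<in> V" if "v \<in> V" for v c
    using span_scale[OF that[unfolded V_def], of c] unfolding V_def by (simp add: seq_scale_def)
  have Vl2: "l2seq v" if "v \<in> V" for v using l2seq_orbit_span[OF la that[unfolded V_def]] .
  from hilbert[OF V0 Vadd Vsc Vl2 lb e0 far] obtain c where
    cc: "(\<exists>C. \<forall>n. cmod (c n) \<le> C) \<and> (\<exists>n. c n \<noteq> 0) \<and> (\<forall>u\<in>V. summable (\<lambda>n. cmod (u n)) \<longrightarrow> rip c u = 0)" ..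
  have cb: "\<exists>C. \<forall>n. cmod (c n) \<le> C" using cc by (rule conjunct1)
  have cnz: "\<exists>n. c n \<noteq> 0" using cc[THEN conjunct2] by (rule conjunct1)
  have orth: "rip c u = 0" if "u \<in> V" "summable (\<lambda>n. cmod (u n))" for u
    using cc[THEN conjunct2, THEN conjunct2] that by blast
  obtain C where C: "\<And>n. cmod (c n) \<le> C" using cb by blast
  define \<beta> where "\<beta> n = cnj (c n)" for n
  have "(\<lambda>n. \<beta> n * a (n+N)) sums 0" for N
  proof -
    define u where "u n = a (n + N)" for n
    have uV: "u \<in> V" unfolding V_def
      using span_base[OF orbit_in[of N a]] unfolding funpow_bshift u_def by (simp add: add.commute)
    have u1: "summable (\<lambda>n. cmod (u n))" unfolding u_def using a1 summable_iff_shift[of "\<lambda>n. cmod (a n)" N] by simp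
    have iuV: "(\<lambda>n. \<i> * u n) \<in> V" by (rule Vsc[OF uV])
    have iu1: "summable (\<lambda>n. cmod (\<i> * u n))" using u1 by (simp add: norm_mult)
    have r1: "rip c u = 0" by (rule orth[OF uV u1])
    have r2: "rip c (\<lambda>n. \<i> * u n) = 0" by (rule orth[OF iuV iu1])
    have sm: "summable (\<lambda>n. \<beta> n * u n)"
    proof (rule summable_comparison_test[OF _ summable_mult[OF u1, of C]])
      have "norm (\<beta> n * u n) \<le> C * cmod (u n)" for n
        unfolding \<beta>_def norm_mult complex_mod_cnj by (rule mult_right_mono[OF C norm_ge_zero])
      then show "\<exists>N. \<forall>n\<ge>N. norm (\<beta> n * u n) \<le> C * cmod (u n)" by blast
    qed
    then have S: "(\<lambda>n. \<beta> n * u n) sums (\<Sum>n. \<beta> n * u n)" by (rule summable_sums)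
    have "(\<lambda>n. Re (\<beta> n * u n)) sums Re (\<Sum>n. \<beta> n * u n)" by (rule sums_Re[OF S])
    moreover have "(\<lambda>n. Re (\<beta> n * u n)) = (\<lambda>n. Re (c n * cnj (u n)))"
      by (rule ext) (simp add: \<beta>_def)
    ultimately have "(\<lambda>n. Re (c n * cnj (u n))) sums Re (\<Sum>n. \<beta> n * u n)" by simp
    then have re0: "Re (\<Sum>n. \<beta> n * u n) = 0" using r1 unfolding rip_def by (simp add: sums_iff)
    have "(\<lambda>n. Im (\<beta> n * u n)) sums Im (\<Sum>n. \<beta> n * u n)" by (rule sums_Im[OF S])
    moreover have "(\<lambda>n. Im (\<beta> n * u n)) = (\<lambda>n. - Re (c n * cnj (\<i> * u n)))"
      by (rule ext) (simp add: \<beta>_def algebra_simps)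
    ultimately have "(\<lambda>n. - Re (c n * cnj (\<i> * u n))) sums Im (\<Sum>n. \<beta> n * u n)" by simp
    then have "(\<lambda>n. Re (c n * cnj (\<i> * u n))) sums (- Im (\<Sum>n. \<beta> n * u n))"
      using sums_minus by fastforce
    then have "- Im (\<Sum>n. \<beta> n * u n) = 0" using r2 unfolding rip_def by (simp add: sums_iff)
    with re0 have "Re (\<Sum>n. \<beta> n * u n) = 0" "Im (\<Sum>n. \<beta> n * u n) = 0" by simp_all
    then have "(\<Sum>n. \<beta> n * u n) = 0" by (simp add: complex_eq_iff)
    then show ?thesis using S unfolding u_def by simp
  qed
  moreover have "\<exists>n. \<beta> n \<noteq> 0" using cnz unfolding \<beta>_def by simp
  moreover have "\<forall>n. cmod (\<beta> n) \<le> C" using C unfolding \<beta>_def by simp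
  ultimately show ?thesis by blast
qed

lemma remove_zeros:
  fixes \<Gamma> :: "complex \<Rightarrow> complex"
  assumes "\<Gamma> holomorphic_on ball 0 1" "\<exists>w\<in>ball 0 1. \<Gamma> w \<noteq> 0" "0 < r" "r < 1"
  shows "\<exists>Q \<Gamma>'. Q \<noteq> 0 \<and> \<Gamma>' holomorphic_on ball 0 1 \<and> (\<forall>w\<in>ball 0 1. \<Gamma> w = poly Q w * \<Gamma>' w)
           \<and> (\<forall>w\<in>cball 0 r. \<Gamma>' w \<noteq> 0)"
proof -
  have cb: "cball (0::complex) r \<subseteq> ball 0 1" using assms(4) by auto
  define n where "n = card {z\<in>cball 0 r. \<Gamma> z = 0}"
  show ?thesis using assms(1,2) n_def
  proof (induction n arbitrary: \<Gamma> rule: less_induct)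
    case (less n \<Gamma>)
    note holo = less.prems(1) and nz = less.prems(2) and nd = less.prems(3)
    show ?case
    proof (cases "\<exists>z0\<in>cball 0 r. \<Gamma> z0 = 0")
      case False
      then show ?thesis
        using holo by (intro exI[of _ 1] exI[of _ \<Gamma>]) auto
    next
      case True
      then obtain z0 where z0: "z0 \<in> cball 0 r" "\<Gamma> z0 = 0" by blast
      have z0b: "z0 \<in> ball 0 1" using z0 cb by auto
      have nonconst: "\<not> \<Gamma> constant_on ball 0 1"
      proof
        assume "\<Gamma> constant_on ball 0 1"
        then obtain c where "\<forall>z\<in>ball 0 1. \<Gamma> z = c" unfolding constant_on_def by blast
        then show False using nz z0b z0(2) by auto
      qed
      define Z where "Z = {z\<in>cball 0 r. \<Gamma> z = 0}"
      have fZ: "finite Z" unfolding Z_def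
        by (rule holomorphic_compact_finite_zeros[OF holo open_ball connected_ball compact_cball cb nonconst])
      obtain m r0 g where m: "0 < m" and r0: "0 < r0" "ball z0 r0 \<subseteq> ball 0 1"
        and gh: "g holomorphic_on ball z0 r0"
        and geq: "\<And>w. w \<in> ball z0 r0 \<Longrightarrow> \<Gamma> w = (w - z0) ^ m * g w"
        and gnz: "\<And>w. w \<in> ball z0 r0 \<Longrightarrow> g w \<noteq> 0"
        by (rule holomorphic_factor_zero_nonconstant[OF holo open_ball connected_ball z0b z0(2) nonconst])
           (rule that; assumption)
      define \<Gamma>1 where "\<Gamma>1 w = (if w = z0 then g z0 else \<Gamma> w / (w - z0) ^ m)" for w
      have h1: "\<Gamma>1 holomorphic_on ball 0 1"
      proof (rule no_isolated_singularity'[where K="{z0}"])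
        have hs: "\<Gamma> holomorphic_on ball 0 1 - {z0}" using holomorphic_on_subset[OF holo Diff_subset] .
        have "(\<lambda>w. \<Gamma> w / (w - z0) ^ m) holomorphic_on ball 0 1 - {z0}"
          by (intro holomorphic_on_divide holomorphic_on_power holomorphic_on_diff holomorphic_on_id
              holomorphic_on_const hs) auto
        then show "\<Gamma>1 holomorphic_on ball 0 1 - {z0}"
          by (rule holomorphic_transform) (simp add: \<Gamma>1_def)
        show "open (ball (0::complex) 1)" by simp
        show "finite {z0}" by simp
        fix z assume "z \<in> {z0}"
        then have zz: "z = z0" by simp
        have gc: "continuous_on (ball z0 r0) g" using holomorphic_on_imp_continuous_on[OF gh] .
        have "(g \<longlongrightarrow> g z0) (at z0)"
          using gc r0(1) by (simp add: continuous_on_eq_continuous_at isCont_def)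
        moreover have "\<forall>\<^sub>F w in at z0. g w = \<Gamma>1 w"
        proof -
          have "\<forall>\<^sub>F w in at z0. w \<in> ball z0 r0 \<and> w \<noteq> z0 \<and> w \<in> UNIV"
            using eventually_at_ball'[OF r0(1), of z0 UNIV] by simp
          then show ?thesis
          proof (rule eventually_mono)
            fix w assume w: "w \<in> ball z0 r0 \<and> w \<noteq> z0 \<and> w \<in> UNIV"
            then have wb: "w \<in> ball z0 r0" and wz: "w \<noteq> z0" by auto
            have ge: "\<Gamma> w = (w - z0) ^ m * g w" by (rule geq[OF wb])
            have "(w - z0) ^ m \<noteq> 0" using wz by simp
            then have "\<Gamma> w / (w - z0) ^ m = g w" unfolding ge by simp
            then show "g w = \<Gamma>1 w" using wz unfolding \<Gamma>1_def by simp
          qed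
        qed
        ultimately have "(\<Gamma>1 \<longlongrightarrow> g z0) (at z0)" by (rule Lim_transform_eventually)
        then show "(\<Gamma>1 \<longlongrightarrow> \<Gamma>1 z) (at z within ball 0 1)"
        proof -
          have "\<Gamma>1 z = g z0" using zz unfolding \<Gamma>1_def by simp
          then show ?thesis using tendsto_within_open[OF z0b open_ball, of \<Gamma>1 "g z0"] zz
            \<open>(\<Gamma>1 \<longlongrightarrow> g z0) (at z0)\<close> by simp
        qed
      qed
      have eq1: "\<Gamma> w = (w - z0) ^ m * \<Gamma>1 w" if "w \<in> ball 0 1" for w
        using z0(2) m by (cases "w = z0") (auto simp: \<Gamma>1_def)
      have g0: "\<Gamma>1 z0 \<noteq> 0" using gnz[of z0] r0(1) by (simp add: \<Gamma>1_def)
      have Z1: "{z\<in>cball 0 r. \<Gamma>1 z = 0} = Z - {z0}"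
        using g0 by (auto simp: Z_def \<Gamma>1_def)
      have "card (Z - {z0}) < card Z"
        using fZ z0 by (intro card_Diff1_less) (auto simp: Z_def)
      then have lt: "card {z\<in>cball 0 r. \<Gamma>1 z = 0} < n" using Z1 nd unfolding Z_def by simp
      obtain Q1 \<Gamma>' where Q1: "Q1 \<noteq> 0" "\<Gamma>' holomorphic_on ball 0 1"
        "\<forall>w\<in>ball 0 1. \<Gamma>1 w = poly Q1 w * \<Gamma>' w" "\<forall>w\<in>cball 0 r. \<Gamma>' w \<noteq> 0"
        using less.IH[OF lt h1 _ refl] g0 z0b by blast
      define Q where "Q = [:-z0, 1:] ^ m * Q1"
      have "Q \<noteq> 0" unfolding Q_def using Q1(1) by simp
      moreover have "\<forall>w\<in>ball 0 1. \<Gamma> w = poly Q w * \<Gamma>' w"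
        using eq1 Q1(3) unfolding Q_def by (simp add: poly_power)
      ultimately show ?thesis using Q1(2,4) by blast
    qed
  qed
qed

lemma H1: fixes g :: "nat \<Rightarrow> 'a::banach"
  shows "summable (\<lambda>n. norm (g n)) \<Longrightarrow> infsum g UNIV = suminf g"
  by (rule infsumI, rule norm_summable_imp_has_sum) (auto intro: summable_sums summable_norm_cancel)

lemma H2: fixes g :: "nat \<Rightarrow> 'a::banach"
  shows "summable (\<lambda>n. norm (g n)) \<Longrightarrow> (\<lambda>n. norm (g n)) summable_on UNIV"
  using norm_summable_imp_summable_on[of "\<lambda>n. norm (g n)"] by simp

lemma H3: fixes g :: "nat \<Rightarrow> 'a::banach"
  shows "(\<lambda>n. norm (g n)) summable_on UNIV \<Longrightarrow> summable (\<lambda>n. norm (g n))"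
  using summable_on_UNIV_nonneg_real_iff[of "\<lambda>n. norm (g n)"] by simp

lemma double_infsum:
  fixes g :: "nat \<times> nat \<Rightarrow> complex"
  assumes ab: "(\<lambda>x. norm (g x)) summable_on UNIV"
  shows "infsum g UNIV = (\<Sum>i. \<Sum>j. g (i,j))"
proof -
  have U: "(UNIV :: (nat \<times> nat) set) = Sigma UNIV (\<lambda>_. UNIV)" by simp
  have ab': "(\<lambda>x. norm (g x)) summable_on Sigma UNIV (\<lambda>_. UNIV)" using ab U by simp
  have inner: "(\<lambda>j. norm (g (i,j))) summable_on UNIV" for i
    using Infinite_Sum.abs_summable_on_Sigma_iff[THEN iffD1, OF ab'] by blast
  have outer: "(\<lambda>i. norm (infsum (\<lambda>j. norm (g (i, j))) UNIV)) summable_on UNIV"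
    using Infinite_Sum.abs_summable_on_Sigma_iff[THEN iffD1, OF ab'] by blast
  have innerS: "summable (\<lambda>j. norm (g (i,j)))" for i using H3[OF inner] .
  have e1: "infsum (\<lambda>j. g (i,j)) UNIV = (\<Sum>j. g (i,j))" for i using H1[OF innerS] .
  have e2: "infsum (\<lambda>j. norm (g (i,j))) UNIV = (\<Sum>j. norm (g (i,j)))" for i using H1[of "\<lambda>j. norm (g (i,j))"] innerS by simp
  have oS: "summable (\<lambda>i. (\<Sum>j. norm (g (i,j))))"
    using H3[OF outer] e2 by (simp add: suminf_nonneg innerS)
  have oS2: "summable (\<lambda>i. norm (\<Sum>j. g (i,j)))"
  proof (rule summable_comparison_test[OF _ oS])
    show "\<exists>N. \<forall>n\<ge>N. norm (norm (\<Sum>j. g (n, j))) \<le> (\<Sum>j. norm (g (n, j)))"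
      using summable_norm[OF innerS] by auto
  qed
  have "infsum g UNIV = infsum g (Sigma UNIV (\<lambda>_. UNIV))" using U by simp
  also have "\<dots> = infsum (\<lambda>i. infsum (\<lambda>j. g (i,j)) UNIV) UNIV"
    by (rule infsum_Sigma_banach[symmetric]) (rule abs_summable_summable[OF ab'])
  also have "\<dots> = infsum (\<lambda>i. \<Sum>j. g (i,j)) UNIV" using e1 by simp
  also have "\<dots> = (\<Sum>i. \<Sum>j. g (i,j))" by (rule H1[OF oS2])
  finally show ?thesis .
qed

lemma prod_abs_summable:
  fixes p q :: "nat \<Rightarrow> complex"
  assumes "summable (\<lambda>m. norm (p m))" "summable (\<lambda>n. norm (q n))"
  shows "(\<lambda>z. norm (p (fst z) * q (snd z))) summable_on UNIV"
proof -
  have U: "(UNIV :: (nat \<times> nat) set) = Sigma UNIV (\<lambda>_. UNIV)" by simp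
  have qS: "(\<lambda>n. norm (q n)) summable_on UNIV" using H2[OF assms(2)] by simp
  have qI: "infsum (\<lambda>n. norm (q n)) UNIV = (\<Sum>n. norm (q n))" using H1[of "\<lambda>n. norm (q n)"] assms(2) by simp
  have "(\<lambda>z. norm (p (fst z) * q (snd z))) summable_on Sigma UNIV (\<lambda>_. UNIV)"
  proof (rule Infinite_Sum.abs_summable_on_Sigma_iff[THEN iffD2], intro conjI ballI)
    fix m :: nat
    show "(\<lambda>n. norm (p (fst (m, n)) * q (snd (m, n)))) summable_on UNIV"
      using summable_on_cmult_right[OF qS, of "norm (p m)"] by (simp add: norm_mult)
  next
    have eqm: "infsum (\<lambda>n. norm (p (fst (m, n)) * q (snd (m, n)))) UNIV
        = norm (p m) * (\<Sum>n. norm (q n))" for m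
      by (simp add: norm_mult infsum_cmult_right' qI)
    moreover have "(\<lambda>m. norm (norm (p m) * (\<Sum>n. norm (q n)))) summable_on UNIV"
    proof -
      have S0: "(\<Sum>n. norm (q n)) \<ge> 0" using assms(2) by (intro suminf_nonneg) auto
      have pS: "(\<lambda>m. norm (p m)) summable_on UNIV" using H2[OF assms(1)] by simp
      have "(\<lambda>m. norm (p m) * (\<Sum>n. norm (q n))) summable_on UNIV" by (rule summable_on_cmult_left[OF pS])
      moreover have "(\<lambda>m. norm (norm (p m) * (\<Sum>n. norm (q n)))) = (\<lambda>m. norm (p m) * (\<Sum>n. norm (q n)))"
        using S0 by (simp add: abs_mult)
      ultimately show ?thesis by simp
    qed
    ultimately show "(\<lambda>m. norm (infsum (\<lambda>n. norm (p (fst (m, n)) * q (snd (m, n)))) UNIV)) summable_on UNIV"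
      by (simp only: eqm)
  qed
  then show ?thesis using U by simp
qed

lemma reindex_abs:
  fixes f :: "nat \<times> nat \<Rightarrow> complex"
  assumes fab: "(\<lambda>z. norm (f z)) summable_on UNIV" and bij: "bij_betw h UNIV P"
  shows "(\<lambda>z. norm (f (h z))) summable_on UNIV"
proof -
  have "(\<lambda>z. norm (f z)) summable_on P" by (rule summable_on_subset_banach[OF fab]) simp
  then show ?thesis using summable_on_reindex_bij_betw[OF bij, of "\<lambda>z. norm (f z)"] by simp
qed

lemma E1:
  fixes a \<beta> :: "nat \<Rightarrow> complex" and x w :: complex
  assumes a1: "summable (\<lambda>n. norm (a n * x^n))" and a0: "summable (\<lambda>n. norm (a n))"
    and bB: "\<And>n. cmod (\<beta> n) \<le> Cb" and w1: "cmod w < 1" and xw: "x * w = 1"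
    and orth: "\<And>N. (\<lambda>n. \<beta> n * a (n+N)) sums 0"
  shows "(\<Sum>n. a n * x^n) * (\<Sum>n. \<beta> n * w^n) = (\<Sum>k. (\<Sum>m. a m * \<beta> (m+k)) * w^k)"
proof -
  have Cb0: "Cb \<ge> 0" using bB[of 0] norm_ge_zero order_trans by blast
  have bS: "summable (\<lambda>n. norm (\<beta> n * w^n))"
  proof (rule summable_comparison_test[OF _ summable_mult[OF summable_geometric[of "cmod w"], of Cb]])
    show "\<exists>N. \<forall>n\<ge>N. norm (norm (\<beta> n * w ^ n)) \<le> Cb * cmod w ^ n"
      using bB by (auto simp: norm_mult norm_power intro!: mult_right_mono)
  qed (use w1 in simp)
  have abS: "summable (\<lambda>m. a m * \<beta> (m+k))" for k
  proof (rule summable_norm_cancel, rule summable_comparison_test[OF _ summable_mult2[OF a0, of Cb]])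
    show "\<exists>N. \<forall>n\<ge>N. norm (norm (a n * \<beta> (n + k))) \<le> norm (a n) * Cb"
      using bB by (auto simp: norm_mult intro!: mult_left_mono)
  qed
  have baS: "summable (\<lambda>n. \<beta> n * a (n+j))" for j using orth[of j] by (rule sums_summable)
  define f where "f z = (a (fst z) * x ^ (fst z)) * (\<beta> (snd z) * w ^ (snd z))" for z
  have fab: "(\<lambda>z. norm (f z)) summable_on UNIV"
    unfolding f_def by (rule prod_abs_summable[OF a1 bS])
  have fs: "f summable_on UNIV" using abs_summable_summable fab by blast
  have xwm: "x ^ m * w ^ m = 1" for m using xw by (simp add: power_mult_distrib[symmetric])
  have tot: "infsum f UNIV = (\<Sum>n. a n * x^n) * (\<Sum>n. \<beta> n * w^n)"
  proof -
    have "infsum f UNIV = (\<Sum>m. \<Sum>n. f (m,n))" by (rule double_infsum[OF fab])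
    also have "\<dots> = (\<Sum>m. (a m * x ^ m) * (\<Sum>n. \<beta> n * w^n))"
      unfolding f_def using suminf_mult[OF summable_norm_cancel[OF bS]] by simp
    also have "\<dots> = (\<Sum>n. a n * x^n) * (\<Sum>n. \<beta> n * w^n)"
      using suminf_mult2[OF summable_norm_cancel[OF a1], of "\<Sum>n. \<beta> n * w^n"] by simp
    finally show ?thesis .
  qed
  define P1 where "P1 = {z::nat\<times>nat. fst z \<le> snd z}"
  define P2 where "P2 = {z::nat\<times>nat. snd z < fst z}"
  have U: "(UNIV :: (nat\<times>nat) set) = P1 \<union> P2" "P1 \<inter> P2 = {}" unfolding P1_def P2_def by auto
  have split: "infsum f UNIV = infsum f P1 + infsum f P2"
    using U infsum_Un_disjoint[OF summable_on_subset_banach[OF fs, of P1] summable_on_subset_banach[OF fs, of P2]]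
    by simp
  define h1 where "h1 z = (snd z, snd z + fst z)" for z :: "nat\<times>nat"
  have b1: "bij_betw h1 UNIV P1"
    by (rule bij_betwI[where g="\<lambda>z. (snd z - fst z, fst z)"]) (auto simp: h1_def P1_def)
  define h2 where "h2 z = (snd z + Suc (fst z), snd z)" for z :: "nat\<times>nat"
  have b2: "bij_betw h2 UNIV P2"
    by (rule bij_betwI[where g="\<lambda>z. (fst z - snd z - 1, snd z)"]) (auto simp: h2_def P2_def)
  have I1: "infsum f P1 = (\<Sum>k. (\<Sum>m. a m * \<beta> (m+k)) * w^k)"
  proof -
    have "infsum f P1 = infsum (\<lambda>z. f (h1 z)) UNIV" by (rule infsum_reindex_bij_betw[OF b1, symmetric])
    also have "\<dots> = (\<Sum>k. \<Sum>m. f (h1 (k, m)))" by (rule double_infsum[OF reindex_abs[OF fab b1]])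
    also have "\<dots> = (\<Sum>k. \<Sum>m. (a m * \<beta> (m+k)) * w^k)"
    proof -
      have "f (h1 (k, m)) = (a m * \<beta> (m+k)) * w^k" for k m
      proof -
        have "f (h1 (k, m)) = (a m * \<beta> (m+k)) * (x^m * w^m) * w^k"
          unfolding f_def h1_def by (simp add: power_add algebra_simps)
        then show ?thesis using xwm[of m] by simp
      qed
      then show ?thesis by simp
    qed
    also have "\<dots> = (\<Sum>k. (\<Sum>m. a m * \<beta> (m+k)) * w^k)"
    proof -
      have "(\<Sum>m. (a m * \<beta> (m+k)) * w^k) = (\<Sum>m. a m * \<beta> (m+k)) * w^k" for k
        by (rule suminf_mult2[OF abS, symmetric])
      then show ?thesis by (simp only:)
    qed
    finally show ?thesis .
  qed
  have I2: "infsum f P2 = 0"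
  proof -
    have "infsum f P2 = infsum (\<lambda>z. f (h2 z)) UNIV" by (rule infsum_reindex_bij_betw[OF b2, symmetric])
    also have "\<dots> = (\<Sum>j. \<Sum>n. f (h2 (j, n)))" by (rule double_infsum[OF reindex_abs[OF fab b2]])
    also have "\<dots> = (\<Sum>j. \<Sum>n. (\<beta> n * a (n + Suc j)) * x ^ Suc j)"
    proof -
      have "f (h2 (j, n)) = (\<beta> n * a (n + Suc j)) * x ^ Suc j" for j n
      proof -
        have "f (h2 (j, n)) = (\<beta> n * a (n + Suc j)) * (x^n * w^n) * x ^ Suc j"
          unfolding f_def h2_def by (simp add: power_add algebra_simps)
        then show ?thesis using xwm[of n] by simp
      qed
      then show ?thesis by simp
    qed
    also have "\<dots> = (\<Sum>j. (\<Sum>n. \<beta> n * a (n + Suc j)) * x ^ Suc j)"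
    proof -
      have "(\<Sum>n. (\<beta> n * a (n + Suc j)) * x ^ Suc j) = (\<Sum>n. \<beta> n * a (n + Suc j)) * x ^ Suc j" for j
        by (rule suminf_mult2[OF baS, symmetric])
      then show ?thesis by (simp only:)
    qed
    also have "\<dots> = 0"
    proof -
      have "(\<Sum>n. \<beta> n * a (n + Suc j)) = 0" for j using orth[of "Suc j"] by (simp only: sums_iff)
      then show ?thesis by (simp only: mult_zero_left suminf_zero)
    qed
    finally show ?thesis .
  qed
  show ?thesis using tot split I1 I2 by simp
qed

lemma bdd_radius:
  fixes c :: "nat \<Rightarrow> complex"
  assumes "\<And>n. cmod (c n) \<le> C"
  shows "fps_conv_radius (Abs_fps c) \<ge> 1"
  unfolding fps_conv_radius_def
proof (rule conv_radius_geI_ex')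
  fix r :: real assume r: "0 < r" "ereal r < 1"
  then have r1: "r < 1" by simp
  show "summable (\<lambda>n. fps_nth (Abs_fps c) n * of_real r ^ n)"
  proof (rule summable_norm_cancel, rule summable_comparison_test[OF _ summable_mult[OF summable_geometric[of r], of C]])
    show "\<exists>N. \<forall>n\<ge>N. norm (norm (fps_nth (Abs_fps c) n * complex_of_real r ^ n)) \<le> C * r ^ n"
      using assms r by (auto simp: norm_mult norm_power intro!: mult_right_mono)
  qed (use r r1 in simp)
qed

lemma coeff_rec:
  fixes a :: "nat \<Rightarrow> complex" and R :: "complex poly"
  assumes r0: "\<rho>' > 0" and rad: "ereal \<rho>' \<le> fps_conv_radius (Abs_fps a)"
    and eq: "\<And>z. cmod z < \<rho>' \<Longrightarrow> poly R z * eval_fps (Abs_fps a) z = (\<Sum>k\<le>d. c k * z^k)"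
    and n: "n > d"
  shows "(\<Sum>i=0..n. coeff R i * a (n - i)) = 0"
proof -
  define P where "P = fps_of_poly R * Abs_fps a"
  define T where "T = fps_of_poly (\<Sum>k\<le>d. monom (c k) k)"
  have radP: "fps_conv_radius P > 0"
  proof -
    have "fps_conv_radius P \<ge> min (fps_conv_radius (fps_of_poly R)) (fps_conv_radius (Abs_fps a))"
      unfolding P_def by (rule fps_conv_radius_mult)
    moreover have "min (fps_conv_radius (fps_of_poly R)) (fps_conv_radius (Abs_fps a)) \<ge> ereal \<rho>'"
      using rad by simp
    ultimately have "ereal \<rho>' \<le> fps_conv_radius P" by (rule order_trans[rotated])
    moreover have "(0::ereal) < ereal \<rho>'" using r0 by simp
    ultimately show ?thesis by (rule order.strict_trans2[rotated])
  qed
  have radT: "fps_conv_radius T > 0" unfolding T_def by simp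
  have ev: "\<forall>\<^sub>F z in nhds 0. eval_fps P z = eval_fps T z"
  proof -
    have "\<forall>\<^sub>F z in nhds 0. z \<in> ball (0::complex) \<rho>'" using r0 by (intro eventually_nhds_in_open) auto
    then show ?thesis
    proof (rule eventually_mono)
      fix z :: complex assume "z \<in> ball 0 \<rho>'"
      then have z: "cmod z < \<rho>'" by simp
      have "eval_fps P z = poly R z * eval_fps (Abs_fps a) z"
      proof -
        have "ereal (cmod z) < ereal \<rho>'" using z by simp
        then have "ereal (cmod z) < fps_conv_radius (Abs_fps a)" using rad by (rule order.strict_trans2)
        then show ?thesis unfolding P_def by (subst eval_fps_mult) auto
      qed
      also have "\<dots> = (\<Sum>k\<le>d. c k * z^k)" by (rule eq[OF z])
      also have "\<dots> = eval_fps T z" unfolding T_def by (simp add: poly_sum poly_monom)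
      finally show "eval_fps P z = eval_fps T z" .
    qed
  qed
  have PT: "P = T" by (rule eval_fps_eqD[OF radP radT ev])
  have "fps_nth T n = 0" unfolding T_def using n by (simp add: coeff_sum)
  then have "fps_nth P n = 0" using PT by simp
  then show ?thesis unfolding P_def by (simp add: fps_mult_nth)
qed

lemma analytic_rec:
  fixes a \<beta> :: "nat \<Rightarrow> complex"
  assumes \<rho>1: "\<rho> > 1" and a\<rho>: "summable (\<lambda>n. cmod (a n) * \<rho>^n)"
    and bB: "\<And>n. cmod (\<beta> n) \<le> Cb" and bnz: "\<exists>n. \<beta> n \<noteq> 0"
    and orth: "\<And>N. (\<lambda>n. \<beta> n * a (n+N)) sums 0"
  shows "\<exists>d p. p d \<noteq> 0 \<and> (\<forall>n\<ge>1. (\<Sum>i\<le>d. p i * a (n+i)) = 0)"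
proof -
  have \<rho>0: "\<rho> > 0" using \<rho>1 by simp
  have a0: "summable (\<lambda>n. norm (a n))"
  proof (rule summable_comparison_test[OF _ a\<rho>])
    have "cmod (a n) \<le> cmod (a n) * \<rho> ^ n" for n
      using \<rho>1 by (intro mult_le_cancel_left1[THEN iffD2] impI one_le_power) auto
    then show "\<exists>N. \<forall>n\<ge>N. norm (norm (a n)) \<le> cmod (a n) * \<rho> ^ n" by simp
  qed
  have Cb0: "Cb \<ge> 0" using bB[of 0] norm_ge_zero order_trans by blast
  define \<phi> where "\<phi> k = (\<Sum>m. a m * \<beta> (m+k))" for k
  have \<phi>B: "cmod (\<phi> k) \<le> (\<Sum>m. norm (a m)) * Cb" for k
  proof -
    have pt: "norm (a m * \<beta> (m+k)) \<le> norm (a m) * Cb" for m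
      using bB by (simp add: norm_mult mult_left_mono)
    have sn: "summable (\<lambda>m. norm (a m * \<beta> (m+k)))"
      by (rule summable_comparison_test[OF _ summable_mult2[OF a0, of Cb]]) (use pt in simp)
    have "cmod (\<phi> k) \<le> (\<Sum>m. norm (a m * \<beta> (m+k)))" unfolding \<phi>_def by (rule summable_norm[OF sn])
    also have "\<dots> \<le> (\<Sum>m. norm (a m) * Cb)" by (rule suminf_le[OF pt sn summable_mult2[OF a0]])
    also have "\<dots> = (\<Sum>m. norm (a m)) * Cb" by (rule suminf_mult2[OF a0, symmetric])
    finally show ?thesis .
  qed
  define FA where "FA = Abs_fps a"
  define FB where "FB = Abs_fps \<beta>"
  define FP where "FP = Abs_fps \<phi>"
  have radA: "ereal \<rho> \<le> fps_conv_radius FA"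
  proof -
    have "summable (\<lambda>n. a n * (of_real \<rho>) ^ n)"
      by (rule summable_norm_cancel) (use a\<rho> \<rho>0 in \<open>simp add: norm_mult norm_power\<close>)
    then have "conv_radius a \<ge> norm (of_real \<rho> :: complex)" by (rule conv_radius_geI)
    then show ?thesis unfolding FA_def fps_conv_radius_def using \<rho>0 by simp
  qed
  have radB: "1 \<le> fps_conv_radius FB" unfolding FB_def by (rule bdd_radius[OF bB])
  have radP: "1 \<le> fps_conv_radius FP" unfolding FP_def by (rule bdd_radius[OF \<phi>B])
  define A where "A = eval_fps FA"
  define B where "B = eval_fps FB"
  define \<Psi> where "\<Psi> = eval_fps FP"
  have Bh: "B holomorphic_on ball 0 1"
    unfolding B_def by (rule holomorphic_on_eval_fps, rule ball_eball_mono) (use radB in \<open>simp add: one_ereal_def\<close>)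
  have \<Psi>h: "\<Psi> holomorphic_on ball 0 1"
    unfolding \<Psi>_def by (rule holomorphic_on_eval_fps, rule ball_eball_mono) (use radP in \<open>simp add: one_ereal_def\<close>)
  have Ah: "A holomorphic_on ball 0 \<rho>"
    unfolding A_def by (rule holomorphic_on_eval_fps, rule ball_eball_mono) (use radA in simp)
  have Bnz: "\<exists>w\<in>ball 0 1. B w \<noteq> 0"
  proof (rule ccontr)
    assume "\<not> (\<exists>w\<in>ball 0 1. B w \<noteq> 0)"
    then have B0: "\<And>w. w \<in> ball 0 1 \<Longrightarrow> B w = 0" by blast
    have "\<forall>\<^sub>F z in nhds 0. eval_fps FB z = eval_fps 0 z"
    proof -
      have "\<forall>\<^sub>F z in nhds 0. z \<in> ball (0::complex) 1" by (intro eventually_nhds_in_open) auto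
      then show ?thesis by (rule eventually_mono) (use B0 in \<open>simp add: B_def\<close>)
    qed
    moreover have "fps_conv_radius FB > 0" using radB by (rule order.strict_trans2[rotated]) simp
    ultimately have "FB = 0" by (intro eval_fps_eqD) auto
    then have "\<beta> n = 0" for n unfolding FB_def by (metis fps_zero_nth fps_nth_Abs_fps)
    then show False using bnz by blast
  qed
  define r where "r = (1/\<rho> + 1) / 2"
  have ir: "1/\<rho> < 1" using \<rho>1 by simp
  have r: "1/\<rho> < r" "r < 1" "0 < r" using ir \<rho>0 unfolding r_def by (auto simp: field_simps)
  obtain Q \<Gamma> where Q: "Q \<noteq> 0" and \<Gamma>h: "\<Gamma> holomorphic_on ball 0 1"
    and BQ: "\<forall>w\<in>ball 0 1. B w = poly Q w * \<Gamma> w" and \<Gamma>nz: "\<forall>w\<in>cball 0 r. \<Gamma> w \<noteq> 0"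
    using remove_zeros[OF Bh Bnz r(3) r(2)] by blast
  have ident: "A (1/w) * B w = \<Psi> w" if w: "1/\<rho> < cmod w" "cmod w < 1" for w
  proof -
    have wp: "cmod w > 0" using w(1) \<rho>0 by (meson less_trans divide_pos_pos zero_less_one)
    then have w0: "w \<noteq> 0" by auto
    define x where "x = 1/w"
    have xw: "x * w = 1" unfolding x_def using w0 by simp
    have "1 / cmod w < \<rho>" using w(1) wp \<rho>0 by (simp add: field_simps)
    then have cx: "cmod x < \<rho>" unfolding x_def by (simp add: norm_divide)
    have a1: "summable (\<lambda>n. norm (a n * x^n))"
    proof (rule summable_comparison_test[OF _ a\<rho>])
      have "norm (a n * x^n) \<le> cmod (a n) * \<rho> ^ n" for n
        unfolding norm_mult norm_power using cx by (intro mult_left_mono power_mono) auto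
      then show "\<exists>N. \<forall>n\<ge>N. norm (norm (a n * x ^ n)) \<le> cmod (a n) * \<rho> ^ n" by simp
    qed
    have "(\<Sum>n. a n * x^n) * (\<Sum>n. \<beta> n * w^n) = (\<Sum>k. (\<Sum>m. a m * \<beta> (m+k)) * w^k)"
      by (rule E1[OF a1 a0 bB w(2) xw orth])
    then show ?thesis unfolding A_def B_def \<Psi>_def FA_def FB_def FP_def eval_fps_def x_def \<phi>_def by simp
  qed
  define s where "s = (1/\<rho> + r) / 2"
  have ip: "1/\<rho> > 0" using \<rho>0 by simp
  have mid: "\<And>x y :: real. x < y \<Longrightarrow> x < (x + y)/2 \<and> (x+y)/2 < y" by auto
  have s1: "1/\<rho> < s" "s < r" unfolding s_def using mid[OF r(1)] by auto
  have s3: "0 < s" using s1(1) ip by linarith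
  note s = s1 s3
  define \<rho>' where "\<rho>' = 1/s"
  have \<rho>': "0 < \<rho>'" "1/r < \<rho>'" "\<rho>' < \<rho>"
  proof -
    show "0 < \<rho>'" unfolding \<rho>'_def using s by simp
    show "1/r < \<rho>'" unfolding \<rho>'_def using s by (intro divide_strict_left_mono) auto
    have "1/\<rho> < s" by (rule s(1))
    then show "\<rho>' < \<rho>" unfolding \<rho>'_def using s \<rho>0 by (simp add: field_simps)
  qed
  define G where "G w = \<Psi> w / \<Gamma> w" for w
  have brb: "ball (0::complex) r \<subseteq> ball 0 1" using r by auto
  have Gh: "G holomorphic_on ball 0 r"
  proof -
    have "(\<lambda>w. \<Psi> w / \<Gamma> w) holomorphic_on ball 0 r"
      by (intro holomorphic_on_divide holomorphic_on_subset[OF \<Psi>h brb] holomorphic_on_subset[OF \<Gamma>h brb])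
         (use \<Gamma>nz in auto)
    then show ?thesis unfolding G_def .
  qed
  define R where "R = reflect_poly Q"
  define d where "d = degree Q"
  have OV: "poly R z * A z = z^d * G (1/z)" if z: "1/r < cmod z" "cmod z < \<rho>" for z
  proof -
    have zp: "cmod z > 0" using z(1) r(3) by (meson less_trans divide_pos_pos zero_less_one)
    then have z0: "z \<noteq> 0" by auto
    define w where "w = 1/z"
    have cw: "cmod w = 1 / cmod z" unfolding w_def by (simp add: norm_divide)
    have w1: "1/\<rho> < cmod w" unfolding cw using z(2) zp \<rho>0 by (simp add: field_simps)
    have w2: "cmod w < r" unfolding cw using z(1) zp r by (simp add: field_simps)
    have wb: "w \<in> ball 0 1" using w2 r by simp
    have wc: "w \<in> cball 0 r" using w2 by simp
    have id: "A z * B w = \<Psi> w" using ident[OF w1] w2 r unfolding w_def by simp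
    have Bw: "B w = poly Q w * \<Gamma> w" using BQ wb by blast
    have \<Gamma>w: "\<Gamma> w \<noteq> 0" using \<Gamma>nz wc by blast
    have "A z * poly Q w = G w" unfolding G_def using id Bw \<Gamma>w by (simp add: field_simps)
    moreover have "poly R z = z^d * poly Q w"
      unfolding R_def d_def w_def using poly_reflect_poly_nz[OF z0, of Q] by (simp add: divide_inverse)
    ultimately have "poly R z * A z = z^d * G w" by (simp add: algebra_simps)
    then show ?thesis unfolding w_def .
  qed
  define F where "F z = (if cmod z < \<rho>' then poly R z * A z else z^d * G (1/z))" for z
  have Fh: "F holomorphic_on UNIV"
  proof -
    define S1 where "S1 = ball (0::complex) \<rho>'"
    define S2 where "S2 = - cball (0::complex) (1/r)"
    have o1: "open S1" unfolding S1_def by simp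
    have o2: "open S2" unfolding S2_def by auto
    have mS2: "z \<in> S2 \<longleftrightarrow> 1/r < cmod z" for z unfolding S2_def by auto
    have U: "UNIV = S1 \<union> S2"
    proof -
      have "z \<in> S1 \<or> z \<in> S2" for z
        using \<rho>'(2) unfolding S1_def mS2 by auto
      then show ?thesis by blast
    qed
    have h1: "F holomorphic_on S1"
    proof (rule holomorphic_transform)
      have "A holomorphic_on S1" unfolding S1_def
        by (rule holomorphic_on_subset[OF Ah]) (use \<rho>'(3) in auto)
      then show "(\<lambda>z. poly R z * A z) holomorphic_on S1"
        by (intro holomorphic_on_mult poly_holomorphic_on holomorphic_on_ident)
      show "poly R z * A z = F z" if "z \<in> S1" for z using that unfolding S1_def F_def by simp
    qed
    have h2: "F holomorphic_on S2"
    proof (rule holomorphic_transform)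
      have inv: "(\<lambda>z. 1/z) holomorphic_on S2"
        by (intro holomorphic_on_divide holomorphic_on_const holomorphic_on_ident)
           (use r(3) in \<open>auto simp: mS2\<close>)
      have img: "(\<lambda>z. 1/z) ` S2 \<subseteq> ball 0 r"
      proof
        fix y assume "y \<in> (\<lambda>z. 1/z) ` S2"
        then obtain z where z: "z \<in> S2" "y = 1/z" by blast
        have zp: "cmod z > 0" using z(1) r(3) unfolding mS2 by (meson less_trans divide_pos_pos zero_less_one)
        have "1/r < cmod z" using z(1) unfolding mS2 .
        then have "1 / cmod z < r" using zp r(3) by (simp add: field_simps)
        then show "y \<in> ball 0 r" using z(2) by (simp add: norm_divide)
      qed
      have "(G \<circ> (\<lambda>z. 1/z)) holomorphic_on S2" by (rule holomorphic_on_compose_gen[OF inv Gh img])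
      then show "(\<lambda>z. z^d * G (1/z)) holomorphic_on S2"
        by (intro holomorphic_on_mult holomorphic_on_power holomorphic_on_ident) (simp add: o_def)
      show "z^d * G (1/z) = F z" if "z \<in> S2" for z
      proof (cases "cmod z < \<rho>'")
        case True
        have "1/r < cmod z" using that unfolding mS2 .
        moreover have "cmod z < \<rho>" using True \<rho>'(3) by linarith
        ultimately have "poly R z * A z = z^d * G (1/z)" by (rule OV)
        then show ?thesis using True unfolding F_def by simp
      next
        case False then show ?thesis unfolding F_def by simp
      qed
    qed
    have "F holomorphic_on S1 \<union> S2" by (rule holomorphic_on_Un[OF h1 h2 o1 o2])
    then show ?thesis using U by simp
  qed
  have Fb: "\<exists>M. \<forall>z. \<rho>' \<le> cmod z \<longrightarrow> norm (F z) \<le> M * cmod z ^ d"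
  proof -
    have csub: "cball (0::complex) s \<subseteq> ball 0 r" using s by auto
    have cG: "continuous_on (cball 0 s) G"
      by (rule holomorphic_on_imp_continuous_on[OF holomorphic_on_subset[OF Gh csub]])
    have "compact (G ` cball 0 s)" by (rule compact_continuous_image[OF cG compact_cball])
    then have "bounded (G ` cball 0 s)" by (rule compact_imp_bounded)
    then obtain M where M: "\<forall>y\<in>G ` cball 0 s. norm y \<le> M" unfolding bounded_iff by blast
    have "norm (F z) \<le> M * cmod z ^ d" if z: "\<rho>' \<le> cmod z" for z
    proof -
      have zp: "cmod z > 0" using z \<rho>'(1) by linarith
      have Fz: "F z = z^d * G (1/z)" using z unfolding F_def by simp
      have "1 / cmod z \<le> 1 / \<rho>'" using z \<rho>'(1) zp by (intro divide_left_mono mult_pos_pos) auto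
      then have "cmod (1/z) \<le> s" unfolding \<rho>'_def using s by (simp add: norm_divide)
      then have "1/z \<in> cball 0 s" by simp
      then have "norm (G (1/z)) \<le> M" using M by blast
      then have "cmod z ^ d * norm (G (1/z)) \<le> cmod z ^ d * M" by (intro mult_left_mono) auto
      then show ?thesis unfolding Fz by (simp add: norm_mult norm_power mult.commute)
    qed
    then show ?thesis by blast
  qed
  then obtain M where M: "\<And>z. \<rho>' \<le> cmod z \<Longrightarrow> norm (F z) \<le> M * cmod z ^ d" by blast
  define c where "c k = (deriv ^^ k) F 0 / fact k" for k
  have Fpoly: "F \<xi> = (\<Sum>k\<le>d. c k * \<xi> ^ k)" for \<xi>
    unfolding c_def by (rule Liouville_polynomial[OF Fh M])
  have eq: "poly R z * eval_fps (Abs_fps a) z = (\<Sum>k\<le>d. c k * z^k)" if "cmod z < \<rho>'" for z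
  proof -
    have "F z = poly R z * A z" using that unfolding F_def by simp
    then show ?thesis using Fpoly[of z] unfolding A_def FA_def by simp
  qed
  have radA': "ereal \<rho>' \<le> fps_conv_radius (Abs_fps a)"
    using radA \<rho>'(3) unfolding FA_def by (meson ereal_less_eq(3) less_imp_le order_trans)
  have cr: "(\<Sum>i=0..n. coeff R i * a (n - i)) = 0" if "n > d" for n
    by (rule coeff_rec[OF \<rho>'(1) radA' eq that])
  have rec: "(\<Sum>j\<le>d. coeff Q j * a (m + j)) = 0" if m: "m \<ge> 1" for m
  proof -
    have "(\<Sum>i=0..m+d. coeff R i * a (m + d - i)) = 0" using cr[of "m+d"] m by simp
    moreover have "(\<Sum>i=0..m+d. coeff R i * a (m + d - i)) = (\<Sum>i=0..d. coeff R i * a (m + d - i))"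
      by (rule sum.mono_neutral_right) (auto simp: R_def d_def coeff_reflect_poly)
    moreover have "(\<Sum>i=0..d. coeff R i * a (m + d - i)) = (\<Sum>i=0..d. coeff Q (d - i) * a (m + d - i))"
      by (rule sum.cong) (auto simp: R_def d_def coeff_reflect_poly)
    moreover have "(\<Sum>i=0..d. coeff Q (d - i) * a (m + d - i)) = (\<Sum>i=0..d. coeff Q (d - (d + 0 - i)) * a (m + d - (d + 0 - i)))"
      by (rule sum.atLeastAtMost_rev)
    moreover have "(\<Sum>i=0..d. coeff Q (d - (d + 0 - i)) * a (m + d - (d + 0 - i))) = (\<Sum>j\<le>d. coeff Q j * a (m + j))"
      by (subst atLeast0AtMost[symmetric]) (rule sum.cong, auto)
    ultimately show ?thesis by simp
  qed
  have "coeff Q d \<noteq> 0" unfolding d_def using Q by simp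
  then show ?thesis using rec by blast
qed

lemma equiv_decay:
  fixes a :: "nat \<Rightarrow> complex"
  assumes \<rho>1: "\<rho> > 1" and a\<rho>: "summable (\<lambda>n. cmod (a n) * \<rho>^n)"
  shows "infinite_dim_span (shift_orbit a) \<longleftrightarrow> cyclic_bshift a"
proof
  assume cyc: "cyclic_bshift a"
  show "infinite_dim_span (shift_orbit a)"
  proof (rule ccontr)
    assume "\<not> infinite_dim_span (shift_orbit a)"
    then obtain B where "finite B" "cspan (shift_orbit a) \<subseteq> cspan B"
      unfolding infinite_dim_span_def by blast
    from dep_rec[OF this] obtain d p where "p d \<noteq> 0" "\<forall>n. (\<Sum>i\<le>d. p i * a (n+i)) = 0" by blast
    from rec_not_cyclic[OF this] cyc show False by blast
  qed
next
  assume inf: "infinite_dim_span (shift_orbit a)"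
  show "cyclic_bshift a"
  proof (rule ccontr)
    assume nc: "\<not> cyclic_bshift a"
    have a0: "summable (\<lambda>n. cmod (a n))"
    proof (rule summable_comparison_test[OF _ a\<rho>])
      have "cmod (a n) \<le> cmod (a n) * \<rho> ^ n" for n
        using \<rho>1 by (intro mult_le_cancel_left1[THEN iffD2] impI one_le_power) auto
      then show "\<exists>N. \<forall>n\<ge>N. norm (cmod (a n)) \<le> cmod (a n) * \<rho> ^ n" by simp
    qed
    have la: "l2seq a" unfolding l2seq_def
    proof (rule summable_comparison_test[OF _ a0])
      have "(\<lambda>n. cmod (a n)) \<longlonglongrightarrow> 0" by (rule summable_LIMSEQ_zero[OF a0])
      then have "\<forall>\<^sub>F n in sequentially. cmod (a n) < 1" by (rule order_tendstoD) simp
      then obtain N where N: "\<And>n. n \<ge> N \<Longrightarrow> cmod (a n) < 1" unfolding eventually_sequentially by blast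
      have "norm ((cmod (a n))\<^sup>2) \<le> cmod (a n)" if "n \<ge> N" for n
      proof -
        have "(cmod (a n))\<^sup>2 = cmod (a n) * cmod (a n)" by (simp add: power2_eq_square)
        also have "\<dots> \<le> cmod (a n) * 1" using N[OF that] by (intro mult_left_mono) auto
        finally show ?thesis by simp
      qed
      then show "\<exists>N. \<forall>n\<ge>N. norm ((cmod (a n))\<^sup>2) \<le> cmod (a n)" by blast
    qed
    obtain \<beta> where \<beta>: "\<exists>C. \<forall>n. cmod (\<beta> n) \<le> C" "\<exists>n. \<beta> n \<noteq> 0" "\<forall>N. (\<lambda>n. \<beta> n * a (n+N)) sums 0"
      using orth_vec[OF la a0 nc] by blast
    obtain C where C: "\<And>n. cmod (\<beta> n) \<le> C" using \<beta>(1) by blast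
    obtain d p where "p d \<noteq> 0" "\<forall>n\<ge>1. (\<Sum>i\<le>d. p i * a (n+i)) = 0"
      using analytic_rec[OF \<rho>1 a\<rho> C \<beta>(2)] \<beta>(3) by blast
    then have "\<not> infinite_dim_span (shift_orbit a)" by (rule rec_findim)
    then show False using inf by blast
  qed
qed

lemma decay_reindex:
  fixes g :: "int \<Rightarrow> real" and h :: "nat \<Rightarrow> int" and f :: "nat \<Rightarrow> real"
  assumes gs: "g summable_on UNIV" and ih: "inj h" and le: "\<And>n. f n \<le> g (h n)" and f0: "\<And>n. 0 \<le> f n"
  shows "summable f"
proof -
  have "g summable_on (h ` UNIV)" by (rule summable_on_subset_banach[OF gs]) simp
  then have "(g \<circ> h) summable_on UNIV" using summable_on_reindex[of h UNIV g] ih by simp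
  moreover have g0: "\<And>n. 0 \<le> (g \<circ> h) n" using le f0 order_trans by (simp, blast)
  ultimately have "summable (g \<circ> h)" using summable_on_UNIV_nonneg_real_iff by blast
  then show ?thesis
    by (rule summable_comparison_test[rotated]) (use le f0 in simp)
qed

lemma diag_bound:
  fixes M :: "complex^'m^'m"
  shows "cmod (M $ k $ k) \<le> norm M"
  using Finite_Cartesian_Product.norm_nth_le[of "M $ k" k] Finite_Cartesian_Product.norm_nth_le[of M k]
  by linarith

lemma coef_decay:
  fixes A :: "int \<Rightarrow> real \<Rightarrow> complex^'m^'m" and Atil :: "int \<Rightarrow> complex^'m^'m"
  assumes eta: "eta > 0" and Kc: "Kc \<ge> 1" and rj: "\<And>j. r j = of_int j"
    and At: "\<And>j t. \<bar>j\<bar> \<ge> Kc \<Longrightarrow> A j t = Atil j"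
    and HA: "(\<lambda>j. (SUP t. norm (A j t)) * exp (eta * \<bar>r j\<bar>)) summable_on UNIV"
    and h: "inj h" and hb: "\<And>n. \<bar>h n\<bar> = Kc + int n"
  shows "summable (\<lambda>n. cmod (Atil (h n) $ k $ k) * exp eta ^ n)"
proof (rule decay_reindex[OF HA h])
  fix n
  show "0 \<le> cmod (Atil (h n) $ k $ k) * exp eta ^ n" by simp
  have hK: "\<bar>h n\<bar> \<ge> Kc" using hb[of n] by simp
  have sup: "(SUP t. norm (A (h n) t)) = norm (Atil (h n))" using At[OF hK] by simp
  have rr: "\<bar>r (h n)\<bar> = of_int Kc + real n" using hb[of n] rj[of "h n"] by simp
  have e1: "exp eta ^ n = exp (eta * real n)" by (simp add: exp_of_nat_mult[symmetric] mult.commute)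
  have e2: "exp (eta * real n) \<le> exp (eta * (of_int Kc + real n))"
    using eta Kc by (simp add: mult_left_mono)
  have "cmod (Atil (h n) $ k $ k) * exp eta ^ n \<le> norm (Atil (h n)) * exp (eta * (of_int Kc + real n))"
    unfolding e1 by (intro mult_mono diag_bound e2) auto
  then show "cmod (Atil (h n) $ k $ k) * exp eta ^ n \<le> (SUP t. norm (A (h n) t)) * exp (eta * \<bar>r (h n)\<bar>)"
    unfolding sup rr .
qed

theorem lemma6p8:
  fixes eta :: real and r :: "int \<Rightarrow> real"
    and A :: "int \<Rightarrow> real \<Rightarrow> complex^'m^'m"
    and K :: "real \<Rightarrow> real \<Rightarrow> complex^'m^'m"
    and Kc :: int and Atil :: "int \<Rightarrow> complex^'m^'m" and Ktil :: "real \<Rightarrow> complex^'m^'m"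
  assumes "eta > 0"
    and "HA eta r A" and "HK eta K" and "HH eta r A K"
    and "HSh1 r A K Kc Atil Ktil"
  defines "alpha \<equiv> (\<lambda>k n. Atil (- (Kc + int n)) $ k $ k)"
    and "beta \<equiv> (\<lambda>k n. Atil (Kc + int n) $ k $ k)"
  shows "(\<forall>k. infinite_dim_span (shift_orbit (alpha k)) \<and> infinite_dim_span (shift_orbit (beta k)))
     \<longleftrightarrow> (\<forall>k. cyclic_bshift (alpha k) \<and> cyclic_bshift (beta k))"
proof -
  have Hb: "Hb r A K Kc Atil Ktil" using assms(5) unfolding HSh1_def by blast
  have Kc: "Kc \<ge> 1" and rj: "\<And>j. r j = of_int j" and At: "\<And>j t. \<bar>j\<bar> \<ge> Kc \<Longrightarrow> A j t = Atil j"
    using Hb unfolding Hb_def by auto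
  have HAs: "(\<lambda>j. (SUP t. norm (A j t)) * exp (eta * \<bar>r j\<bar>)) summable_on UNIV"
    using assms(2) unfolding HA_def by blast
  have e1: "exp eta > 1" using assms(1) by simp
  define h1 where "h1 n = - (Kc + int n)" for n
  define h2 where "h2 n = Kc + int n" for n
  have i1: "inj h1" unfolding h1_def inj_def by simp
  have i2: "inj h2" unfolding h2_def inj_def by simp
  have b1: "\<bar>h1 n\<bar> = Kc + int n" for n unfolding h1_def using Kc by simp
  have b2: "\<bar>h2 n\<bar> = Kc + int n" for n unfolding h2_def using Kc by simp
  have da: "summable (\<lambda>n. cmod (alpha k n) * exp eta ^ n)" for k
    using coef_decay[OF assms(1) Kc rj At HAs i1 b1, of k] unfolding alpha_def h1_def .
  have db: "summable (\<lambda>n. cmod (beta k n) * exp eta ^ n)" for k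
    using coef_decay[OF assms(1) Kc rj At HAs i2 b2, of k] unfolding beta_def h2_def .
  have "infinite_dim_span (shift_orbit (alpha k)) \<longleftrightarrow> cyclic_bshift (alpha k)" for k
    by (rule equiv_decay[OF e1 da])
  moreover have "infinite_dim_span (shift_orbit (beta k)) \<longleftrightarrow> cyclic_bshift (beta k)" for k
    by (rule equiv_decay[OF e1 db])
  ultimately show ?thesis by simp
qed

end
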